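(* Assume that the presentation $\mathcal{P}^{[2]}_r(e,b)$ is consistent and that the test equations \begin{align*} c(a_k c(a_j a_i)) &= c(c(a_k a_j) a_i) & (w(a_k)+w(a_j)+w(a_i) \leq d),\\ c(r_j c(a_j a_i)) &= c( c(r_j a_j) a_i) & (r_j < \infty,\ w(a_j)+w(a_i) \leq d),\\ c(r_i c(a_j a_i )) &= c( a_j c( r_i a_i)) & (r_i < \infty,\ w(a_j)+w(a_i) \leq d) \end{align*} hold. Then the $R$-linear maps $\varphi_L, \varphi_R \colon A^{[2]} \rightarrow A^{[2]}$ induced by $\tau_L,\tau_R$ satisfy, for all $b,b'\in A^{[2]}$: (i) $\varphi_L(s) = \varphi_R(s)$; (ii) $\varphi_L^2(b) = sb$ and $\varphi_R^2(b) = bs$; (iii) $\varphi_L(bb')=\varphi_L(b)b'$ and $\varphi_R(bb')=b\varphi_R(b')$; (iv) $\varphi_R(b)b'=b \varphi_L(b')$ and $\varphi_L(\varphi_R(b))=\varphi_R(\varphi_L(b))$; and, if $r_1<\infty$, also (v) $pb=r_1\varphi_L(b)$ and (vi) $bp=r_1\varphi_R(b)$.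
   Context: Let $R$ be a field or the ring of integers; all algebras are associative. $\mathcal{P}_r(e,b)$ is a nilpotent presentation on generators $a_1,\ldots,a_n$ with $r_1,\ldots,r_n \in \mathbb N \cup \{\infty\}$ and $e_{i,k}, b_{i,j,k} \in R$ (with $0 \leq e_{i,k}, b_{i,j,k} < r_k$ whenever $r_k<\infty$) and relations $r_i a_i = e_{i,i+1} a_{i+1} + \ldots + e_{i,n} a_n$ (for $r_i<\infty$) and $a_j a_i = b_{i,j,\ell+1} a_{\ell+1} + \ldots + b_{i,j,n} a_n$ with $\ell = \max\{i,j\}$ (for $1\le i,j\le n$). For $1 \le k \le n$, $\mathcal{P}^{[k]}_r(e,b)$ is the presentation on $a_k,\ldots,a_n$ whose relations are those relations of $\mathcal{P}_r(e,b)$ involving only these generators; $A^{[k]}$ is the algebra it defines and $F_k$ is the free associative algebra on $a_k,\ldots,a_n$. A presentation is consistent if each element of the defined algebra is represented by a unique reduced form $x_1a_1+\ldots+x_na_n$ ($0\le x_i<r_i$ if $r_i<\infty$). $c$ denotes the function on the free algebra induced by the collection algorithm, mapping an element to one of its reduced forms. $w$ is a weight function: $w(a_i)\in\mathbb N$ minimal subject to $w(a_k)\ge w(a_i)$ whenever $e_{i,k}\neq0$ and $w(a_k)\ge w(a_i)+w(a_j)$ whenever $b_{i,j,k}\ne 0$; $d=\max\{w(a_1),\ldots,w(a_n)\}$. The maps $\tau_L,\tau_R\colon F_2\to F_2$ are defined by $\tau_L(a_j)=\sum_{k=1}^n b_{j,1,k}a_k$ with $\tau_L(vw)=\tau_L(v)w$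 for all $v,w\in F_2$, and $\tau_R(a_j)=\sum_{k=1}^n b_{1,j,k}a_k$ with $\tau_R(vw)=v\tau_R(w)$ for all $v,w\in F_2$; under these hypotheses they induce $R$-linear maps $\varphi_L,\varphi_R$ on $A^{[2]}$. Further $s=\sum_{k=1}^n b_{1,1,k}a_k$ (representing $a_1a_1$) and, if $r_1<\infty$, $p=\sum_{k=1}^n e_{1,k}a_k$ (representing $r_1a_1$); $s,p$ also denote their images in $A^{[2]}$. *)

theory Defs
  imports Main "HOL-Library.Poly_Mapping"
begin

text \<open>Generators are a_1,...,a_n (indices 1..n). r i = None encodes r_i = infinity,
 r i = Some m encodes r_i = m (a positive natural number).
 e i k and b i j k are the coefficients e_{i,k}, b_{i,j,k}; only indices with
 i < k <= n (resp. max i j < k <= n) are used.\<close>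

section \<open>Free (non-unital) associative algebra on generators, as finitely supported
  functions from words (lists of generator indices) to R\<close>

type_synonym 'r ncpoly = "nat list \<Rightarrow>\<^sub>0 'r"

definition ncmul :: "'r::comm_ring_1 ncpoly \<Rightarrow> 'r ncpoly \<Rightarrow> 'r ncpoly" where
  "ncmul p q = (\<Sum>u\<in>Poly_Mapping.keys p. \<Sum>v\<in>Poly_Mapping.keys q. Poly_Mapping.single (u @ v) (Poly_Mapping.lookup p u * Poly_Mapping.lookup q v))"

definition ncsc :: "'r::comm_ring_1 \<Rightarrow> 'r ncpoly \<Rightarrow> 'r ncpoly" where
  "ncsc c p = (\<Sum>u\<in>Poly_Mapping.keys p. Poly_Mapping.single u (c * Poly_Mapping.lookup p u))"

definition free_alg :: "nat \<Rightarrow> nat \<Rightarrow> 'r::comm_ring_1 ncpoly set" where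
  "free_alg n k = {p. \<forall>u\<in>Poly_Mapping.keys p. u \<noteq> [] \<and> set u \<subseteq> {k..n}}"

definition linpoly :: "nat \<Rightarrow> nat \<Rightarrow> (nat \<Rightarrow> 'r::comm_ring_1) \<Rightarrow> 'r ncpoly" where
  "linpoly n k x = (\<Sum>l\<in>{k..n}. Poly_Mapping.single [l] (x l))"

definition pres_rels :: "nat \<Rightarrow> (nat \<Rightarrow> nat option) \<Rightarrow> (nat \<Rightarrow> nat \<Rightarrow> 'r::comm_ring_1)
    \<Rightarrow> (nat \<Rightarrow> nat \<Rightarrow> nat \<Rightarrow> 'r) \<Rightarrow> nat \<Rightarrow> 'r ncpoly set" where
  "pres_rels n r e b k =
     {Poly_Mapping.single [i] (of_nat m) - (\<Sum>l\<in>{i<..n}. Poly_Mapping.single [l] (e i l)) | i m.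
        i \<in> {k..n} \<and> r i = Some m}
   \<union> {Poly_Mapping.single [j, i] 1 - (\<Sum>l\<in>{max i j<..n}. Poly_Mapping.single [l] (b i j l)) | i j.
        i \<in> {k..n} \<and> j \<in> {k..n}}"

inductive_set pres_ideal :: "nat \<Rightarrow> (nat \<Rightarrow> nat option) \<Rightarrow> (nat \<Rightarrow> nat \<Rightarrow> 'r::comm_ring_1)
    \<Rightarrow> (nat \<Rightarrow> nat \<Rightarrow> nat \<Rightarrow> 'r) \<Rightarrow> nat \<Rightarrow> 'r ncpoly set"
  for n r e b k where
  rel: "p \<in> pres_rels n r e b k \<Longrightarrow> p \<in> pres_ideal n r e b k"
| zero: "0 \<in> pres_ideal n r e b k"
| add: "p \<in> pres_ideal n r e b k \<Longrightarrow> q \<in> pres_ideal n r e b k \<Longrightarrow> p + q \<in> pres_ideal n r e b k"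
| smul: "p \<in> pres_ideal n r e b k \<Longrightarrow> ncsc c p \<in> pres_ideal n r e b k"
| lmul: "p \<in> pres_ideal n r e b k \<Longrightarrow> u \<noteq> [] \<Longrightarrow> set u \<subseteq> {k..n} \<Longrightarrow>
           ncmul (Poly_Mapping.single u 1) p \<in> pres_ideal n r e b k"
| rmul: "p \<in> pres_ideal n r e b k \<Longrightarrow> u \<noteq> [] \<Longrightarrow> set u \<subseteq> {k..n} \<Longrightarrow>
           ncmul p (Poly_Mapping.single u 1) \<in> pres_ideal n r e b k"

text \<open>Equality in A^[k] of the images of two elements of F_k.\<close>
definition alg_eq :: "nat \<Rightarrow> (nat \<Rightarrow> nat option) \<Rightarrow> (nat \<Rightarrow> nat \<Rightarrow> 'r::comm_ring_1)
    \<Rightarrow> (nat \<Rightarrow> nat \<Rightarrow> nat \<Rightarrow> 'r) \<Rightarrow> nat \<Rightarrow> 'r ncpoly \<Rightarrow> 'r ncpoly \<Rightarrow> bool" where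
  "alg_eq n r e b k p q \<longleftrightarrow> p - q \<in> pres_ideal n r e b k"

definition red_coeff :: "nat \<Rightarrow> 'r::comm_ring_1 \<Rightarrow> bool" where
  "red_coeff m x \<longleftrightarrow> x \<in> of_nat ` {..<m}"

definition reduced_form :: "nat \<Rightarrow> (nat \<Rightarrow> nat option) \<Rightarrow> nat \<Rightarrow> (nat \<Rightarrow> 'r::comm_ring_1) \<Rightarrow> bool" where
  "reduced_form n r k x \<longleftrightarrow> (\<forall>l. (l < k \<or> n < l) \<longrightarrow> x l = 0)
      \<and> (\<forall>l\<in>{k..n}. \<forall>m. r l = Some m \<longrightarrow> red_coeff m (x l))"

definition consistent :: "nat \<Rightarrow> (nat \<Rightarrow> nat option) \<Rightarrow> (nat \<Rightarrow> nat \<Rightarrow> 'r::comm_ring_1)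
    \<Rightarrow> (nat \<Rightarrow> nat \<Rightarrow> nat \<Rightarrow> 'r) \<Rightarrow> nat \<Rightarrow> bool" where
  "consistent n r e b k \<longleftrightarrow>
     (\<forall>p\<in>free_alg n k. \<exists>!x. reduced_form n r k x \<and> alg_eq n r e b k p (linpoly n k x))"

definition nil_presentation :: "nat \<Rightarrow> (nat \<Rightarrow> nat option) \<Rightarrow> (nat \<Rightarrow> nat \<Rightarrow> 'r::comm_ring_1)
    \<Rightarrow> (nat \<Rightarrow> nat \<Rightarrow> nat \<Rightarrow> 'r) \<Rightarrow> bool" where
  "nil_presentation n r e b \<longleftrightarrow>
     (\<forall>i\<in>{1..n}. r i \<noteq> Some 0)
   \<and> (\<forall>i\<in>{1..n}. \<forall>k\<in>{i<..n}. \<forall>m. r i \<noteq> None \<and> r k = Some m \<longrightarrow> red_coeff m (e i k))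
   \<and> (\<forall>i\<in>{1..n}. \<forall>j\<in>{1..n}. \<forall>k\<in>{max i j<..n}. \<forall>m. r k = Some m \<longrightarrow> red_coeff m (b i j k))"

definition weight_ok :: "nat \<Rightarrow> (nat \<Rightarrow> nat option) \<Rightarrow> (nat \<Rightarrow> nat \<Rightarrow> 'r::comm_ring_1)
    \<Rightarrow> (nat \<Rightarrow> nat \<Rightarrow> nat \<Rightarrow> 'r) \<Rightarrow> (nat \<Rightarrow> nat) \<Rightarrow> bool" where
  "weight_ok n r e b w \<longleftrightarrow>
     (\<forall>i\<in>{1..n}. 1 \<le> w i)
   \<and> (\<forall>i\<in>{1..n}. \<forall>k\<in>{i<..n}. r i \<noteq> None \<and> e i k \<noteq> 0 \<longrightarrow> w i \<le> w k)
   \<and> (\<forall>i\<in>{1..n}. \<forall>j\<in>{1..n}. \<forall>k\<in>{max i j<..n}. b i j k \<noteq> 0 \<longrightarrow> w i + w j \<le> w k)"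

definition weight :: "nat \<Rightarrow> (nat \<Rightarrow> nat option) \<Rightarrow> (nat \<Rightarrow> nat \<Rightarrow> 'r::comm_ring_1)
    \<Rightarrow> (nat \<Rightarrow> nat \<Rightarrow> nat \<Rightarrow> 'r) \<Rightarrow> nat \<Rightarrow> nat" where
  "weight n r e b i = (LEAST m. \<exists>w. weight_ok n r e b w \<and> w i = m)"

definition max_weight :: "nat \<Rightarrow> (nat \<Rightarrow> nat option) \<Rightarrow> (nat \<Rightarrow> nat \<Rightarrow> 'r::comm_ring_1)
    \<Rightarrow> (nat \<Rightarrow> nat \<Rightarrow> nat \<Rightarrow> 'r) \<Rightarrow> nat" where
  "max_weight n r e b = Max (weight n r e b ` {1..n})"

section \<open>The collection function c on linear forms (coefficient vectors x, x_l for a_l)\<close>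

definition rem_r :: "nat \<Rightarrow> 'r::comm_ring_1 \<Rightarrow> 'r" where
  "rem_r m x = (SOME y. red_coeff m y \<and> (\<exists>q. x = q * of_nat m + y))"

definition quot_r :: "nat \<Rightarrow> 'r::comm_ring_1 \<Rightarrow> 'r" where
  "quot_r m x = (SOME q. x = q * of_nat m + rem_r m x)"

text \<open>Reduce the coefficient of a_l using r_l a_l = e_{l,l+1} a_{l+1} + ... + e_{l,n} a_n.\<close>
definition red_step :: "nat \<Rightarrow> (nat \<Rightarrow> nat option) \<Rightarrow> (nat \<Rightarrow> nat \<Rightarrow> 'r::comm_ring_1)
    \<Rightarrow> nat \<Rightarrow> (nat \<Rightarrow> 'r) \<Rightarrow> (nat \<Rightarrow> 'r)" where
  "red_step n r e l x = (case r l of None \<Rightarrow> x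
     | Some m \<Rightarrow> (\<lambda>t. if t = l then rem_r m (x l)
                       else if l < t \<and> t \<le> n then x t + quot_r m (x l) * e l t else x t))"

definition collect_lin :: "nat \<Rightarrow> (nat \<Rightarrow> nat option) \<Rightarrow> (nat \<Rightarrow> nat \<Rightarrow> 'r::comm_ring_1)
    \<Rightarrow> (nat \<Rightarrow> 'r) \<Rightarrow> (nat \<Rightarrow> 'r)" where
  "collect_lin n r e x = fold (red_step n r e) [1..<Suc n] x"

text \<open>Product of two linear forms u*v, expanded using a_j a_i = sum_l b_{i,j,l} a_l
  (left factor a_j, right factor a_i); the result is again a linear form.\<close>
definition mul_lin :: "nat \<Rightarrow> (nat \<Rightarrow> nat \<Rightarrow> nat \<Rightarrow> 'r::comm_ring_1)
    \<Rightarrow> (nat \<Rightarrow> 'r) \<Rightarrow> (nat \<Rightarrow> 'r) \<Rightarrow> (nat \<Rightarrow> 'r)" where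
  "mul_lin n b u v = (\<lambda>l. if 1 \<le> l \<and> l \<le> n then
      (\<Sum>j\<in>{1..n}. \<Sum>i\<in>{1..n}. if max i j < l then u j * v i * b i j l else 0) else 0)"

definition gen_lin :: "nat \<Rightarrow> nat \<Rightarrow> 'r::comm_ring_1" where
  "gen_lin i = (\<lambda>l. if l = i then 1 else 0)"

definition scale_lin :: "'r::comm_ring_1 \<Rightarrow> (nat \<Rightarrow> 'r) \<Rightarrow> (nat \<Rightarrow> 'r)" where
  "scale_lin c x = (\<lambda>l. c * x l)"

definition c_mul :: "nat \<Rightarrow> (nat \<Rightarrow> nat option) \<Rightarrow> (nat \<Rightarrow> nat \<Rightarrow> 'r::comm_ring_1)
    \<Rightarrow> (nat \<Rightarrow> nat \<Rightarrow> nat \<Rightarrow> 'r) \<Rightarrow> (nat \<Rightarrow> 'r) \<Rightarrow> (nat \<Rightarrow> 'r) \<Rightarrow> (nat \<Rightarrow> 'r)" where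
  "c_mul n r e b u v = collect_lin n r e (mul_lin n b u v)"

definition c_scale :: "nat \<Rightarrow> (nat \<Rightarrow> nat option) \<Rightarrow> (nat \<Rightarrow> nat \<Rightarrow> 'r::comm_ring_1)
    \<Rightarrow> nat \<Rightarrow> (nat \<Rightarrow> 'r) \<Rightarrow> (nat \<Rightarrow> 'r)" where
  "c_scale n r e m u = collect_lin n r e (scale_lin (of_nat m) u)"

definition tauL_gen :: "nat \<Rightarrow> (nat \<Rightarrow> nat \<Rightarrow> nat \<Rightarrow> 'r::comm_ring_1) \<Rightarrow> nat \<Rightarrow> 'r ncpoly" where
  "tauL_gen n b j = (\<Sum>l\<in>{max j 1<..n}. Poly_Mapping.single [l] (b j 1 l))"

definition tauR_gen :: "nat \<Rightarrow> (nat \<Rightarrow> nat \<Rightarrow> nat \<Rightarrow> 'r::comm_ring_1) \<Rightarrow> nat \<Rightarrow> 'r ncpoly" where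
  "tauR_gen n b j = (\<Sum>l\<in>{max 1 j<..n}. Poly_Mapping.single [l] (b 1 j l))"

definition tauL :: "nat \<Rightarrow> (nat \<Rightarrow> nat \<Rightarrow> nat \<Rightarrow> 'r::comm_ring_1) \<Rightarrow> 'r ncpoly \<Rightarrow> 'r ncpoly" where
  "tauL n b p = (\<Sum>u\<in>Poly_Mapping.keys p. ncmul (tauL_gen n b (hd u)) (Poly_Mapping.single (tl u) (Poly_Mapping.lookup p u)))"

definition tauR :: "nat \<Rightarrow> (nat \<Rightarrow> nat \<Rightarrow> nat \<Rightarrow> 'r::comm_ring_1) \<Rightarrow> 'r ncpoly \<Rightarrow> 'r ncpoly" where
  "tauR n b p = (\<Sum>u\<in>Poly_Mapping.keys p. ncmul (Poly_Mapping.single (butlast u) (Poly_Mapping.lookup p u)) (tauR_gen n b (last u)))"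

definition s_elem :: "nat \<Rightarrow> (nat \<Rightarrow> nat \<Rightarrow> nat \<Rightarrow> 'r::comm_ring_1) \<Rightarrow> 'r ncpoly" where
  "s_elem n b = (\<Sum>l\<in>{1<..n}. Poly_Mapping.single [l] (b 1 1 l))"

definition p_elem :: "nat \<Rightarrow> (nat \<Rightarrow> nat \<Rightarrow> 'r::comm_ring_1) \<Rightarrow> 'r ncpoly" where
  "p_elem n e = (\<Sum>l\<in>{1<..n}. Poly_Mapping.single [l] (e 1 l))"

end

theory Submission
  imports Defs
begin

lemma pm_decomp: "p = (\<Sum>u\<in>Poly_Mapping.keys p. Poly_Mapping.single u (Poly_Mapping.lookup p u))"
  by (rule poly_mapping_eqI) (auto simp: lookup_sum lookup_single when_def in_keys_iff)

definition ksum :: "(nat list \<Rightarrow> 'r::comm_ring_1 \<Rightarrow> 'r ncpoly) \<Rightarrow> 'r ncpoly \<Rightarrow> 'r ncpoly" where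
  "ksum h p = (\<Sum>u\<in>Poly_Mapping.keys p. h u (Poly_Mapping.lookup p u))"

definition hlin :: "(nat list \<Rightarrow> 'r::comm_ring_1 \<Rightarrow> 'r ncpoly) \<Rightarrow> bool" where
  "hlin h \<longleftrightarrow> (\<forall>u a c. h u (a + c) = h u a + h u c)"

lemma hlin_zero: "hlin h \<Longrightarrow> h u 0 = 0"
  unfolding hlin_def by (metis add.right_neutral add_right_imp_eq add_0)

lemma ksum_sup:
  assumes "hlin h" "finite U" "Poly_Mapping.keys p \<subseteq> U"
  shows "ksum h p = (\<Sum>u\<in>U. h u (Poly_Mapping.lookup p u))"
  unfolding ksum_def
  by (rule sum.mono_neutral_left) (use assms hlin_zero in \<open>auto simp: in_keys_iff\<close>)

lemma ksum_add:
  assumes "hlin h" shows "ksum h (p + q) = ksum h p + ksum h q"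
proof -
  let ?U = "Poly_Mapping.keys p \<union> Poly_Mapping.keys q"
  have "ksum h (p + q) = (\<Sum>u\<in>?U. h u (Poly_Mapping.lookup (p+q) u))"
    by (rule ksum_sup[OF assms]) (use keys_add[of p q] in auto)
  also have "\<dots> = (\<Sum>u\<in>?U. h u (Poly_Mapping.lookup p u)) + (\<Sum>u\<in>?U. h u (Poly_Mapping.lookup q u))"
    using assms by (simp add: lookup_add hlin_def sum.distrib)
  also have "\<dots> = ksum h p + ksum h q"
    using ksum_sup[OF assms, of ?U p] ksum_sup[OF assms, of ?U q] by simp
  finally show ?thesis .
qed

lemma ksum_zero: "ksum h 0 = 0" by (simp add: ksum_def)

lemma ksum_single: "hlin h \<Longrightarrow> ksum h (Poly_Mapping.single u c) = h u c"
  using ksum_sup[of h "{u}" "Poly_Mapping.single u c"] by simp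

lemma ncsc_ksum: "ncsc c = ksum (\<lambda>u a. Poly_Mapping.single u (c * a))"
  by (rule ext) (simp add: ncsc_def ksum_def)

lemma hlin_ncsc: "hlin (\<lambda>u a. Poly_Mapping.single u (c * a))"
  by (simp add: hlin_def distrib_left single_add)

lemma ncsc_lookup: "Poly_Mapping.lookup (ncsc c p) w = c * Poly_Mapping.lookup p w"
  by (auto simp: ncsc_def lookup_sum lookup_single when_def in_keys_iff)

lemma keys_ncsc: "Poly_Mapping.keys (ncsc c p) \<subseteq> Poly_Mapping.keys p"
  by (auto simp: in_keys_iff ncsc_lookup)

lemma ncsc_add: "ncsc c (p + q) = ncsc c p + ncsc c q"
  by (rule poly_mapping_eqI) (simp add: ncsc_lookup lookup_add distrib_left)
lemma ncsc_add_left: "ncsc (c + d) p = ncsc c p + ncsc d p"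
  by (rule poly_mapping_eqI) (simp add: ncsc_lookup lookup_add distrib_right)
lemma ncsc_diff: "ncsc c (p - q) = ncsc c p - ncsc c q"
  by (rule poly_mapping_eqI) (simp add: ncsc_lookup lookup_minus right_diff_distrib)
lemma ncsc_diff_left: "ncsc (c - d) p = ncsc c p - ncsc d p"
  by (rule poly_mapping_eqI) (simp add: ncsc_lookup lookup_minus left_diff_distrib)
lemma ncsc_ncsc: "ncsc c (ncsc d p) = ncsc (c * d) p"
  by (rule poly_mapping_eqI) (simp add: ncsc_lookup)
lemma ncsc_single: "ncsc c (Poly_Mapping.single u a) = Poly_Mapping.single u (c * a)"
  by (rule poly_mapping_eqI) (simp add: ncsc_lookup lookup_single when_def)
lemma ncsc_zero[simp]: "ncsc c 0 = 0" "ncsc 0 p = 0"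
  by (rule poly_mapping_eqI, simp add: ncsc_lookup)+
lemma ncsc_one[simp]: "ncsc 1 p = p"
  by (rule poly_mapping_eqI) (simp add: ncsc_lookup)
lemma ncsc_m1: "ncsc (-1) p = - p"
  by (rule poly_mapping_eqI) (simp add: ncsc_lookup)
lemma ncsc_uminus: "ncsc (- c) p = - ncsc c p"
  by (rule poly_mapping_eqI) (simp add: ncsc_lookup)
lemma ncsc_sum: "ncsc c (sum f A) = (\<Sum>x\<in>A. ncsc c (f x))"
  by (rule poly_mapping_eqI) (simp add: ncsc_lookup lookup_sum sum_distrib_left)
lemma ncsc_sum_left: "ncsc (sum f A) p = (\<Sum>x\<in>A. ncsc (f x) p)"
  by (rule poly_mapping_eqI) (simp add: ncsc_lookup lookup_sum sum_distrib_right)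

lemma ncmul_sup:
  assumes "finite U" "finite V" "Poly_Mapping.keys p \<subseteq> U" "Poly_Mapping.keys q \<subseteq> V"
  shows "ncmul p q = (\<Sum>u\<in>U. \<Sum>v\<in>V. Poly_Mapping.single (u @ v) (Poly_Mapping.lookup p u * Poly_Mapping.lookup q v))"
proof -
  have "(\<Sum>u\<in>U. \<Sum>v\<in>V. Poly_Mapping.single (u @ v) (Poly_Mapping.lookup p u * Poly_Mapping.lookup q v))
      = (\<Sum>u\<in>Poly_Mapping.keys p. \<Sum>v\<in>V. Poly_Mapping.single (u @ v) (Poly_Mapping.lookup p u * Poly_Mapping.lookup q v))"
    by (rule sum.mono_neutral_right) (use assms in \<open>auto simp: in_keys_iff\<close>)
  also have "\<dots> = (\<Sum>u\<in>Poly_Mapping.keys p. \<Sum>v\<in>Poly_Mapping.keys q. Poly_Mapping.single (u @ v) (Poly_Mapping.lookup p u * Poly_Mapping.lookup q v))"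
    by (rule sum.cong[OF refl], rule sum.mono_neutral_right) (use assms in \<open>auto simp: in_keys_iff\<close>)
  finally show ?thesis by (simp add: ncmul_def)
qed

lemma ncmul_add_left: "ncmul (p + q) s = ncmul p s + ncmul q s"
proof -
  let ?U = "Poly_Mapping.keys p \<union> Poly_Mapping.keys q" and ?V = "Poly_Mapping.keys s"
  have "ncmul (p + q) s = (\<Sum>u\<in>?U. \<Sum>v\<in>?V. Poly_Mapping.single (u @ v) (Poly_Mapping.lookup (p+q) u * Poly_Mapping.lookup s v))"
    by (rule ncmul_sup) (use keys_add[of p q] in auto)
  also have "\<dots> = ncmul p s + ncmul q s"
    by (simp add: ncmul_sup[of ?U ?V p s] ncmul_sup[of ?U ?V q s] lookup_add distrib_right single_add sum.distrib)
  finally show ?thesis .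
qed

lemma ncmul_add_right: "ncmul s (p + q) = ncmul s p + ncmul s q"
proof -
  let ?U = "Poly_Mapping.keys p \<union> Poly_Mapping.keys q" and ?V = "Poly_Mapping.keys s"
  have "ncmul s (p + q) = (\<Sum>v\<in>?V. \<Sum>u\<in>?U. Poly_Mapping.single (v @ u) (Poly_Mapping.lookup s v * Poly_Mapping.lookup (p+q) u))"
    by (rule ncmul_sup) (use keys_add[of p q] in auto)
  also have "\<dots> = ncmul s p + ncmul s q"
    by (simp add: ncmul_sup[of ?V ?U s p] ncmul_sup[of ?V ?U s q] lookup_add distrib_left single_add sum.distrib)
  finally show ?thesis .
qed

lemma ncmul_zero[simp]: "ncmul 0 p = 0" "ncmul p 0 = 0"
  by (simp_all add: ncmul_def)

lemma ncmul_ncsc_left: "ncmul (ncsc c p) q = ncsc c (ncmul p q)"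
proof -
  have "ncmul (ncsc c p) q = (\<Sum>u\<in>Poly_Mapping.keys p. \<Sum>v\<in>Poly_Mapping.keys q. Poly_Mapping.single (u @ v) (Poly_Mapping.lookup (ncsc c p) u * Poly_Mapping.lookup q v))"
    by (rule ncmul_sup) (auto simp: keys_ncsc[THEN subsetD])
  then show ?thesis by (simp add: ncmul_def ncsc_sum ncsc_single ncsc_lookup mult.assoc)
qed

lemma ncmul_ncsc_right: "ncmul p (ncsc c q) = ncsc c (ncmul p q)"
proof -
  have "ncmul p (ncsc c q) = (\<Sum>u\<in>Poly_Mapping.keys p. \<Sum>v\<in>Poly_Mapping.keys q. Poly_Mapping.single (u @ v) (Poly_Mapping.lookup p u * Poly_Mapping.lookup (ncsc c q) v))"
    by (rule ncmul_sup) (auto simp: keys_ncsc[THEN subsetD])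
  then show ?thesis by (simp add: ncmul_def ncsc_sum ncsc_single ncsc_lookup mult.left_commute)
qed

lemma ncmul_single_single: "ncmul (Poly_Mapping.single u a) (Poly_Mapping.single v c) = Poly_Mapping.single (u @ v) (a * c)"
  by (subst ncmul_sup[of "{u}" "{v}"]) auto

lemma ncmul_nil_right: "ncmul p (Poly_Mapping.single [] c) = ncsc c p"
  by (subst ncmul_sup[of "Poly_Mapping.keys p" "{[]}"]) (auto simp: ncsc_def mult.commute)

lemma ncmul_nil_left: "ncmul (Poly_Mapping.single [] c) p = ncsc c p"
  by (subst ncmul_sup[of "{[]}" "Poly_Mapping.keys p"]) (auto simp: ncsc_def)

lemma ncmul_sum_left: "ncmul (sum f A) q = (\<Sum>x\<in>A. ncmul (f x) q)"
  by (induction A rule: infinite_finite_induct) (auto simp: ncmul_add_left)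

lemma ncmul_sum_right: "ncmul q (sum f A) = (\<Sum>x\<in>A. ncmul q (f x))"
  by (induction A rule: infinite_finite_induct) (auto simp: ncmul_add_right)

lemma ncmul_uminus_left: "ncmul (- p) s = - ncmul p s"
  by (metis ncsc_m1 ncmul_ncsc_left)
lemma ncmul_uminus_right: "ncmul s (- p) = - ncmul s p"
  by (metis ncsc_m1 ncmul_ncsc_right)
lemma ncmul_diff_left: "ncmul (p - q) s = ncmul p s - ncmul q s"
  using ncmul_add_left[of p "- q" s] by (simp add: ncmul_uminus_left)
lemma ncmul_diff_right: "ncmul s (p - q) = ncmul s p - ncmul s q"
  using ncmul_add_right[of s p "- q"] by (simp add: ncmul_uminus_right)

lemma ncmul_assoc: "ncmul (ncmul p q) s = ncmul p (ncmul q s)"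
proof -
  have "ncmul (ncmul (\<Sum>u\<in>Poly_Mapping.keys p. Poly_Mapping.single u (Poly_Mapping.lookup p u))
                     (\<Sum>u\<in>Poly_Mapping.keys q. Poly_Mapping.single u (Poly_Mapping.lookup q u)))
              (\<Sum>u\<in>Poly_Mapping.keys s. Poly_Mapping.single u (Poly_Mapping.lookup s u))
      = ncmul (\<Sum>u\<in>Poly_Mapping.keys p. Poly_Mapping.single u (Poly_Mapping.lookup p u))
          (ncmul (\<Sum>u\<in>Poly_Mapping.keys q. Poly_Mapping.single u (Poly_Mapping.lookup q u))
              (\<Sum>u\<in>Poly_Mapping.keys s. Poly_Mapping.single u (Poly_Mapping.lookup s u)))"
    by (simp add: ncmul_sum_left ncmul_sum_right ncmul_single_single mult.assoc)
  then show ?thesis by (simp only: pm_decomp[symmetric])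
qed



definition lin :: "('r::comm_ring_1 ncpoly \<Rightarrow> 'r ncpoly) \<Rightarrow> bool" where
  "lin F \<longleftrightarrow> (\<forall>p q. F (p + q) = F p + F q) \<and> (\<forall>c p. F (ncsc c p) = ncsc c (F p))"

lemma lin_add: "lin F \<Longrightarrow> F (p + q) = F p + F q" by (simp add: lin_def)
lemma lin_ncsc: "lin F \<Longrightarrow> F (ncsc c p) = ncsc c (F p)" by (simp add: lin_def)
lemma lin_zero: "lin F \<Longrightarrow> F 0 = 0"
  using lin_add[of F 0 0] by simp
lemma lin_uminus: "lin F \<Longrightarrow> F (- p) = - F p"
  using lin_ncsc[of F "-1" p] by (simp add: ncsc_m1)
lemma lin_diff: "lin F \<Longrightarrow> F (p - q) = F p - F q"
  using lin_add[of F p "- q"] lin_uminus[of F q] by simp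
lemma lin_sum: "lin F \<Longrightarrow> F (sum f A) = (\<Sum>x\<in>A. F (f x))"
  by (induction A rule: infinite_finite_induct) (auto simp: lin_zero lin_add)

lemma lin_ksum:
  assumes "hlin h" "\<And>u c a. h u (c * a) = ncsc c (h u a)"
  shows "lin (ksum h)"
  unfolding lin_def
proof (intro conjI allI)
  fix p q show "ksum h (p + q) = ksum h p + ksum h q" by (rule ksum_add[OF assms(1)])
next
  fix c p
  have "ksum h (ncsc c p) = (\<Sum>u\<in>Poly_Mapping.keys p. h u (Poly_Mapping.lookup (ncsc c p) u))"
    by (rule ksum_sup[OF assms(1)]) (auto simp: keys_ncsc[THEN subsetD])
  also have "\<dots> = ncsc c (ksum h p)"
    by (simp add: ncsc_lookup assms(2) ksum_def ncsc_sum)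
  finally show "ksum h (ncsc c p) = ncsc c (ksum h p)" .
qed

lemma lin_ncmul_left: "lin (\<lambda>x. ncmul q x)"
  by (simp add: lin_def ncmul_add_right ncmul_ncsc_right)
lemma lin_ncmul_right: "lin (\<lambda>x. ncmul x q)"
  by (simp add: lin_def ncmul_add_left ncmul_ncsc_left)
lemma lin_ncsc_map: "lin (ncsc c)"
  by (simp add: lin_def ncsc_add ncsc_ncsc mult.commute)
lemma lin_comp: "lin F \<Longrightarrow> lin G \<Longrightarrow> lin (\<lambda>x. F (G x))"
  by (simp add: lin_def)

lemma single_as_ncsc: "Poly_Mapping.single u c = ncsc c (Poly_Mapping.single u 1)"
  by (simp add: ncsc_single)

lemma lin_single: "lin F \<Longrightarrow> F (Poly_Mapping.single u c) = ncsc c (F (Poly_Mapping.single u 1))"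
  by (metis single_as_ncsc lin_ncsc)

lemma tauL_ksum: "tauL n b = ksum (\<lambda>u c. ncmul (tauL_gen n b (hd u)) (Poly_Mapping.single (tl u) c))"
  by (rule ext) (simp add: tauL_def ksum_def)
lemma tauR_ksum: "tauR n b = ksum (\<lambda>u c. ncmul (Poly_Mapping.single (butlast u) c) (tauR_gen n b (last u)))"
  by (rule ext) (simp add: tauR_def ksum_def)

lemma hlin_tauL: "hlin (\<lambda>u c. ncmul (tauL_gen n b (hd u)) (Poly_Mapping.single (tl u) c))"
  by (simp add: hlin_def single_add ncmul_add_right)
lemma hlin_tauR: "hlin (\<lambda>u c. ncmul (Poly_Mapping.single (butlast u) c) (tauR_gen n b (last u)))"
  by (simp add: hlin_def single_add ncmul_add_left)

lemma lin_tauL: "lin (tauL n b)"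
  unfolding tauL_ksum
  by (rule lin_ksum[OF hlin_tauL]) (metis single_as_ncsc ncsc_ncsc ncmul_ncsc_right)
lemma lin_tauR: "lin (tauR n b)"
  unfolding tauR_ksum
  by (rule lin_ksum[OF hlin_tauR]) (metis single_as_ncsc ncsc_ncsc ncmul_ncsc_left)

lemma tauL_single: "tauL n b (Poly_Mapping.single u c) = ncmul (tauL_gen n b (hd u)) (Poly_Mapping.single (tl u) c)"
  unfolding tauL_ksum by (rule ksum_single[OF hlin_tauL])
lemma tauR_single: "tauR n b (Poly_Mapping.single u c) = ncmul (Poly_Mapping.single (butlast u) c) (tauR_gen n b (last u))"
  unfolding tauR_ksum by (rule ksum_single[OF hlin_tauR])

lemma ncmul_expand: "ncmul p q = (\<Sum>u\<in>Poly_Mapping.keys p. \<Sum>v\<in>Poly_Mapping.keys q.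
     Poly_Mapping.single (u @ v) (Poly_Mapping.lookup p u * Poly_Mapping.lookup q v))"
  by (simp add: ncmul_def)

lemma ncmul_single_r: "ncmul p (Poly_Mapping.single v c) = (\<Sum>u\<in>Poly_Mapping.keys p. Poly_Mapping.single (u @ v) (Poly_Mapping.lookup p u * c))"
  by (subst ncmul_sup[of "Poly_Mapping.keys p" "{v}"]) auto

lemma tauL_ncmul:
  assumes "\<forall>u\<in>Poly_Mapping.keys p. u \<noteq> []"
  shows "tauL n b (ncmul p q) = ncmul (tauL n b p) q"
proof -
  have "tauL n b (ncmul p q) = (\<Sum>u\<in>Poly_Mapping.keys p. \<Sum>v\<in>Poly_Mapping.keys q.
     ncmul (tauL_gen n b (hd u)) (Poly_Mapping.single (tl u @ v) (Poly_Mapping.lookup p u * Poly_Mapping.lookup q v)))"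
    unfolding ncmul_expand[of p q]
    by (simp add: lin_sum[OF lin_tauL] tauL_single) (use assms in \<open>auto intro!: sum.cong\<close>)
  also have "\<dots> = ncmul (tauL n b p) q"
    unfolding tauL_def
    apply (simp add: ncmul_sum_left ncmul_assoc)
    apply (subst (3) pm_decomp[of q])
    apply (simp add: ncmul_sum_right ncmul_single_single)
    done
  finally show ?thesis .
qed

lemma tauR_ncmul:
  assumes "\<forall>u\<in>Poly_Mapping.keys q. u \<noteq> []"
  shows "tauR n b (ncmul p q) = ncmul p (tauR n b q)"
proof -
  have "tauR n b (ncmul p q) = (\<Sum>u\<in>Poly_Mapping.keys p. \<Sum>v\<in>Poly_Mapping.keys q.
     ncmul (Poly_Mapping.single (u @ butlast v) (Poly_Mapping.lookup p u * Poly_Mapping.lookup q v)) (tauR_gen n b (last v)))"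
    unfolding ncmul_expand[of p q]
    by (simp add: lin_sum[OF lin_tauR] tauR_single) (use assms in \<open>auto intro!: sum.cong simp: butlast_append\<close>)
  also have "\<dots> = ncmul p (tauR n b q)"
    unfolding tauR_def
    apply (simp add: ncmul_sum_right ncmul_assoc[symmetric])
    apply (simp add: ncmul_single_r ncmul_sum_left)
    apply (rule sum.swap)
    done
  finally show ?thesis .
qed

context
  fixes n :: nat and r :: "nat \<Rightarrow> nat option" and e :: "nat \<Rightarrow> nat \<Rightarrow> 'r::comm_ring_1"
    and b :: "nat \<Rightarrow> nat \<Rightarrow> nat \<Rightarrow> 'r"
begin

abbreviation "II \<equiv> pres_ideal n r e b 2"

lemma I_zero: "0 \<in> II" by (rule pres_ideal.zero)
lemma I_add: "p \<in> II \<Longrightarrow> q \<in> II \<Longrightarrow> p + q \<in> II" by (rule pres_ideal.add)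
lemma I_ncsc: "p \<in> II \<Longrightarrow> ncsc c p \<in> II" by (rule pres_ideal.smul)
lemma I_uminus: "p \<in> II \<Longrightarrow> - p \<in> II" by (metis I_ncsc ncsc_m1)
lemma I_diff: "p \<in> II \<Longrightarrow> q \<in> II \<Longrightarrow> p - q \<in> II" by (metis I_add I_uminus diff_conv_add_uminus)
lemma I_sum: "(\<And>x. x \<in> A \<Longrightarrow> f x \<in> II) \<Longrightarrow> sum f A \<in> II"
  by (induction A rule: infinite_finite_induct) (auto intro: I_zero I_add)

lemma I_lmul_single: "p \<in> II \<Longrightarrow> set u \<subseteq> {2..n} \<Longrightarrow> ncmul (Poly_Mapping.single u c) p \<in> II"
  apply (cases "u = []")
   apply (simp add: ncmul_nil_left I_ncsc)
  apply (subst single_as_ncsc)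
  apply (simp add: ncmul_ncsc_left)
  apply (intro I_ncsc pres_ideal.lmul)
    apply auto
  done

lemma I_rmul_single: "p \<in> II \<Longrightarrow> set u \<subseteq> {2..n} \<Longrightarrow> ncmul p (Poly_Mapping.single u c) \<in> II"
  apply (cases "u = []")
   apply (simp add: ncmul_nil_right I_ncsc)
  apply (subst single_as_ncsc)
  apply (simp add: ncmul_ncsc_right)
  apply (intro I_ncsc pres_ideal.rmul)
    apply auto
  done

definition W2 :: "'r ncpoly \<Rightarrow> bool" where
  "W2 q \<longleftrightarrow> (\<forall>u\<in>Poly_Mapping.keys q. set u \<subseteq> {2..n})"

lemma I_lmul: "W2 q \<Longrightarrow> p \<in> II \<Longrightarrow> ncmul q p \<in> II"
  apply (subst pm_decomp[of q])
  apply (simp add: ncmul_sum_left)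
  apply (rule I_sum)
  apply (auto simp: W2_def intro!: I_lmul_single)
  done

lemma I_rmul: "W2 q \<Longrightarrow> p \<in> II \<Longrightarrow> ncmul p q \<in> II"
  apply (subst pm_decomp[of q])
  apply (simp add: ncmul_sum_right)
  apply (rule I_sum)
  apply (auto simp: W2_def intro!: I_rmul_single)
  done

lemma I_reduce:
  assumes "lin F" "lin G"
    and word: "\<And>u. u \<noteq> [] \<Longrightarrow> set u \<subseteq> {2..n} \<Longrightarrow> F (Poly_Mapping.single u 1) - G (Poly_Mapping.single u 1) \<in> II"
    and x: "x \<in> free_alg n 2"
  shows "F x - G x \<in> II"
proof -
  have "F x - G x = F (\<Sum>u\<in>Poly_Mapping.keys x. ncsc (Poly_Mapping.lookup x u) (Poly_Mapping.single u 1))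
        - G (\<Sum>u\<in>Poly_Mapping.keys x. ncsc (Poly_Mapping.lookup x u) (Poly_Mapping.single u 1))"
    by (simp add: ncsc_single flip: pm_decomp)
  also have "\<dots> = (\<Sum>u\<in>Poly_Mapping.keys x. ncsc (Poly_Mapping.lookup x u)
         (F (Poly_Mapping.single u 1) - G (Poly_Mapping.single u 1)))"
    by (simp add: lin_sum[OF assms(1)] lin_sum[OF assms(2)] lin_ncsc[OF assms(1)] lin_ncsc[OF assms(2)]
        ncsc_diff sum_subtractf)
  also have "\<dots> \<in> II"
    using x by (auto simp: free_alg_def intro!: I_sum I_ncsc word)
  finally show ?thesis .
qed

end



lemma divZ:
  assumes bij: "bij (of_int :: int \<Rightarrow> 'r::comm_ring_1)" and m: "m > 0"
  shows "\<exists>y. red_coeff m y \<and> (\<exists>q. (x::'r) = q * of_nat m + y)"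
proof -
  obtain k where k: "x = of_int k" using bij by (metis bij_pointE)
  have "k = k div int m * int m + k mod int m" by simp
  hence "x = of_int (k div int m) * of_nat m + of_int (k mod int m)"
    using k by (metis of_int_add of_int_mult of_int_of_nat_eq)
  moreover have "red_coeff m (of_int (k mod int m) :: 'r)"
  proof -
    have "0 \<le> k mod int m" "k mod int m < int m" using m by auto
    hence "nat (k mod int m) < m" "of_int (k mod int m) = (of_nat (nat (k mod int m)) :: 'r)" by auto
    thus ?thesis unfolding red_coeff_def by (intro image_eqI[of _ _ "nat (k mod int m)"]) auto
  qed
  ultimately show ?thesis by blast
qed

lemma divZ_uniq:
  assumes bij: "bij (of_int :: int \<Rightarrow> 'r::comm_ring_1)" and m: "m > 0"
    and y: "red_coeff m (y::'r)" and y': "red_coeff m y'"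
    and eq: "q * of_nat m + y = q' * of_nat m + y'"
  shows "y = y' \<and> q = q'"
proof -
  obtain a where a: "a < m" "y = of_nat a" using y by (auto simp: red_coeff_def)
  obtain a' where a': "a' < m" "y' = of_nat a'" using y' by (auto simp: red_coeff_def)
  obtain k where k: "q = of_int k" using bij by (metis bij_pointE)
  obtain k' where k': "q' = of_int k'" using bij by (metis bij_pointE)
  have inj: "inj (of_int :: int \<Rightarrow> 'r)" using bij bij_is_inj by blast
  have "(of_int (k * int m + int a) :: 'r) = of_int (k' * int m + int a')"
    using eq a a' k k' by simp
  hence e: "k * int m + int a = k' * int m + int a'" using inj by (meson injD)
  have "(k * int m + int a) mod int m = (k' * int m + int a') mod int m" using e by simp
  moreover have "(k * int m + int a) mod int m = int a" using a m by (simp add: mod_pos_pos_trivial)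
  moreover have "(k' * int m + int a') mod int m = int a'" using a' m by (simp add: mod_pos_pos_trivial)
  ultimately have "a = a'" by simp
  moreover have "k = k'" using e \<open>a = a'\<close> m by simp
  ultimately show ?thesis using a a' k k' by simp
qed

lemma rem_spec:
  assumes "bij (of_int :: int \<Rightarrow> 'r::comm_ring_1)" "m > 0"
  shows "red_coeff m (rem_r m (x::'r)) \<and> x = quot_r m x * of_nat m + rem_r m x"
proof -
  have "red_coeff m (rem_r m x) \<and> (\<exists>q. x = q * of_nat m + rem_r m x)"
    unfolding rem_r_def by (rule someI_ex) (rule divZ[OF assms])
  moreover have "x = quot_r m x * of_nat m + rem_r m x" if "\<exists>q. x = q * of_nat m + rem_r m x"
    unfolding quot_r_def by (rule someI_ex) (rule that)
  ultimately show ?thesis by blast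
qed

lemma rem_eq:
  assumes "bij (of_int :: int \<Rightarrow> 'r::comm_ring_1)" "m > 0" "red_coeff m y" "(x::'r) = q * of_nat m + y"
  shows "rem_r m x = y \<and> quot_r m x = q"
proof -
  have s: "red_coeff m (rem_r m x)" "x = quot_r m x * of_nat m + rem_r m x" using rem_spec[OF assms(1,2), of x] by blast+
  have "quot_r m x * of_nat m + rem_r m x = q * of_nat m + y" using s(2) assms(4) by simp
  from divZ_uniq[OF assms(1,2) s(1) assms(3) this] show ?thesis by blast
qed

lemma red_coeff0: "m > 0 \<Longrightarrow> red_coeff m 0"
  unfolding red_coeff_def by (rule image_eqI[of _ _ 0]) auto

lemma rem_zero: "bij (of_int :: int \<Rightarrow> 'r::comm_ring_1) \<Longrightarrow> m > 0 \<Longrightarrow> rem_r m (0::'r) = 0 \<and> quot_r m (0::'r) = 0"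
  using rem_eq[of m 0 0 0] red_coeff0 by auto

lemma rem_m: "bij (of_int :: int \<Rightarrow> 'r::comm_ring_1) \<Longrightarrow> m > 0 \<Longrightarrow> rem_r m (of_nat m :: 'r) = 0 \<and> quot_r m (of_nat m :: 'r) = 1"
  using rem_eq[of m 0 "of_nat m" 1] red_coeff0 by auto

definition Phi :: "nat \<Rightarrow> (nat \<Rightarrow> 'r::comm_ring_1 ncpoly) \<Rightarrow> (nat \<Rightarrow> 'r) \<Rightarrow> 'r ncpoly" where
  "Phi n g z = (\<Sum>l\<in>{2..n}. ncsc (z l) (g l))"

definition Zlt :: "nat \<Rightarrow> (nat \<Rightarrow> 'r::zero) \<Rightarrow> bool" where
  "Zlt i0 z \<longleftrightarrow> (\<forall>t<i0. z t = 0)"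

locale L23 =
  fixes n :: nat and r :: "nat \<Rightarrow> nat option"
    and e :: "nat \<Rightarrow> nat \<Rightarrow> 'r::comm_ring_1" and b :: "nat \<Rightarrow> nat \<Rightarrow> nat \<Rightarrow> 'r"
  assumes ring: "((\<forall>x::'r. x \<noteq> 0 \<longrightarrow> (\<exists>y. x * y = 1)) \<and> (\<forall>i. r i = None))
                 \<or> bij (of_int :: int \<Rightarrow> 'r)"
    and n1: "1 \<le> n"
    and pres: "nil_presentation n r e b"
    and test1: "\<And>i j k. i \<in> {1..n} \<Longrightarrow> j \<in> {1..n} \<Longrightarrow> k \<in> {1..n} \<Longrightarrow>
        weight n r e b k + weight n r e b j + weight n r e b i \<le> max_weight n r e b \<Longrightarrow>
        c_mul n r e b (gen_lin k) (c_mul n r e b (gen_lin j) (gen_lin i))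
        = c_mul n r e b (c_mul n r e b (gen_lin k) (gen_lin j)) (gen_lin i)"
    and test2: "\<And>i j m. i \<in> {1..n} \<Longrightarrow> j \<in> {1..n} \<Longrightarrow> r j = Some m \<Longrightarrow>
        weight n r e b j + weight n r e b i \<le> max_weight n r e b \<Longrightarrow>
        c_scale n r e m (c_mul n r e b (gen_lin j) (gen_lin i))
        = c_mul n r e b (c_scale n r e m (gen_lin j)) (gen_lin i)"
    and test3: "\<And>i j m. i \<in> {1..n} \<Longrightarrow> j \<in> {1..n} \<Longrightarrow> r i = Some m \<Longrightarrow>
        weight n r e b j + weight n r e b i \<le> max_weight n r e b \<Longrightarrow>
        c_scale n r e m (c_mul n r e b (gen_lin j) (gen_lin i))
        = c_mul n r e b (gen_lin j) (c_scale n r e m (gen_lin i))"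
begin

lemma Zcase: "l \<in> {1..n} \<Longrightarrow> r l = Some m \<Longrightarrow> bij (of_int :: int \<Rightarrow> 'r) \<and> m > 0"
  using ring pres unfolding nil_presentation_def by (metis gr0I option.distinct(1))

lemma red_step_triv: "l \<in> {1..n} \<Longrightarrow> z l = 0 \<Longrightarrow> red_step n r e l z = z"
proof (cases "r l")
  case (Some m)
  assume "l \<in> {1..n}" "z l = 0"
  with Zcase[OF _ Some] rem_zero show ?thesis
    by (auto simp: red_step_def Some fun_eq_iff)
qed (simp add: red_step_def)

lemma red_step_Zlt: "l \<in> {1..n} \<Longrightarrow> Zlt i0 z \<Longrightarrow> Zlt i0 (red_step n r e l z)"
  apply (cases "l < i0")
   apply (simp add: red_step_triv Zlt_def)
  apply (auto simp: Zlt_def red_step_def split: option.splits)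
  done

lemma fold_Zlt: "\<forall>l\<in>set ls. l \<in> {1..n} \<Longrightarrow> Zlt i0 z \<Longrightarrow> Zlt i0 (fold (red_step n r e) ls z)"
  by (induction ls arbitrary: z) (auto simp: red_step_Zlt)

lemma collect_Zlt: "Zlt i0 z \<Longrightarrow> Zlt i0 (collect_lin n r e z)"
  unfolding collect_lin_def by (rule fold_Zlt) auto

definition Cond :: "(nat \<Rightarrow> 'r ncpoly) \<Rightarrow> nat \<Rightarrow> bool" where
  "Cond g i0 \<longleftrightarrow> (\<forall>l m. i0 \<le> l \<longrightarrow> l \<le> n \<longrightarrow> r l = Some m \<longrightarrow>
     ncsc (of_nat m) (g l) - (\<Sum>t\<in>{l<..n}. ncsc (e l t) (g t)) \<in> II n r e b)"

lemma Phi_diff: "Phi n g z - Phi n g z' = Phi n g (\<lambda>t. z t - z' t)"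
  by (simp add: Phi_def sum_subtractf ncsc_diff_left)

lemma red_step_Phi:
  assumes i0: "2 \<le> i0" and C: "Cond g i0" and Z: "Zlt i0 z" and l: "l \<in> {1..n}"
  shows "Phi n g (red_step n r e l z) - Phi n g z \<in> II n r e b"
proof (cases "r l")
  case None thus ?thesis by (simp add: red_step_def I_zero)
next
  case (Some m)
  show ?thesis
  proof (cases "z l = 0")
    case True thus ?thesis using l by (simp add: red_step_triv I_zero)
  next
    case False
    hence li: "i0 \<le> l" using Z by (auto simp: Zlt_def not_less[symmetric])
    define q where "q = quot_r m (z l)"
    define y where "y = rem_r m (z l)"
    have zl: "z l = q * of_nat m + y" using rem_spec[of m "z l"] Zcase[OF l Some] by (simp add: q_def y_def)
    define f where "f t = ncsc (red_step n r e l z t - z t) (g t)" for t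
    have rl: "red_step n r e l z l = y" by (simp add: red_step_def Some y_def)
    have yz: "y - z l = - (q * of_nat m)" using zl by (simp add: algebra_simps)
    have f_l: "f l = ncsc (- (q * of_nat m)) (g l)"
      by (simp only: f_def rl yz)
    have f_t: "f t = (if t \<in> {l<..n} then ncsc (q * e l t) (g t) else 0)" if "t \<noteq> l" for t
      using that by (auto simp: f_def red_step_def Some q_def)
    have "Phi n g (red_step n r e l z) - Phi n g z = (\<Sum>t\<in>{2..n}. f t)"
      unfolding Phi_diff by (simp add: Phi_def f_def)
    also have "\<dots> = f l + (\<Sum>t\<in>{2..n} - {l}. f t)"
      using l li i0 by (subst sum.remove[of _ l]) auto
    also have "(\<Sum>t\<in>{2..n} - {l}. f t) = (\<Sum>t\<in>{l<..n}. f t)"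
      by (rule sum.mono_neutral_right) (use li i0 f_t in auto)
    also have "\<dots> = (\<Sum>t\<in>{l<..n}. ncsc (q * e l t) (g t))"
      by (rule sum.cong) (auto simp: f_t)
    also have "f l + \<dots> = ncsc (- q) (ncsc (of_nat m) (g l) - (\<Sum>t\<in>{l<..n}. ncsc (e l t) (g t)))"
      by (simp add: f_l ncsc_diff ncsc_ncsc ncsc_sum ncsc_uminus sum_negf)
    also have "\<dots> \<in> II n r e b"
      using C li l Some by (intro I_ncsc) (auto simp: Cond_def)
    finally show ?thesis .
  qed
qed

lemma fold_Phi:
  assumes "2 \<le> i0" "Cond g i0"
  shows "\<forall>l\<in>set ls. l \<in> {1..n} \<Longrightarrow> Zlt i0 z \<Longrightarrow> Phi n g (fold (red_step n r e) ls z) - Phi n g z \<in> II n r e b"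
proof (induction ls arbitrary: z)
  case Nil thus ?case by (simp add: I_zero)
next
  case (Cons l ls)
  have "Phi n g (fold (red_step n r e) ls (red_step n r e l z)) - Phi n g (red_step n r e l z) \<in> II n r e b"
    using Cons by (auto intro!: Cons.IH red_step_Zlt)
  moreover have "Phi n g (red_step n r e l z) - Phi n g z \<in> II n r e b"
    using Cons assms by (intro red_step_Phi) auto
  ultimately show ?case by (metis (no_types) I_add diff_add_cancel fold_simps(2) add_diff_eq)
qed

lemma collect_Phi:
  "2 \<le> i0 \<Longrightarrow> Cond g i0 \<Longrightarrow> Zlt i0 z \<Longrightarrow> Phi n g (collect_lin n r e z) - Phi n g z \<in> II n r e b"
  unfolding collect_lin_def by (rule fold_Phi) auto

end



lemma pow2_sum_le: "i < k \<Longrightarrow> j < k \<Longrightarrow> (2::nat)^i + 2^j \<le> 2^k"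
proof -
  assume a: "i < k" "j < k"
  have "(2::nat)^i \<le> 2^(k-1)" "(2::nat)^j \<le> 2^(k-1)" using a by (auto intro: power_increasing)
  moreover have "(2::nat)^k = 2 * 2^(k-1)" using a by (metis Suc_pred' gr_implies_not0 not_gr0 power_Suc)
  ultimately show ?thesis by linarith
qed

lemma single_sum: "Poly_Mapping.single k (sum f A) = (\<Sum>x\<in>A. Poly_Mapping.single k (f x))"
  by (induction A rule: infinite_finite_induct) (simp_all add: single_add)

context L23
begin

abbreviation "wt \<equiv> weight n r e b"
abbreviation "dd \<equiv> max_weight n r e b"

lemma weight_ok_ex: "weight_ok n r e b (\<lambda>i. 2^i)"
  unfolding weight_ok_def
  by (auto intro: power_increasing pow2_sum_le)

lemma wt_attained: "\<exists>w. weight_ok n r e b w \<and> w i = wt i"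
  unfolding weight_def by (rule LeastI_ex) (use weight_ok_ex in blast)

lemma wt_le: "weight_ok n r e b w \<Longrightarrow> wt i \<le> w i"
  unfolding weight_def by (rule Least_le) blast

lemma wt_b: "i \<in> {1..n} \<Longrightarrow> j \<in> {1..n} \<Longrightarrow> k \<in> {max i j<..n} \<Longrightarrow> b i j k \<noteq> 0 \<Longrightarrow> wt i + wt j \<le> wt k"
proof -
  assume a: "i \<in> {1..n}" "j \<in> {1..n}" "k \<in> {max i j<..n}" "b i j k \<noteq> 0"
  obtain w where w: "weight_ok n r e b w" "w k = wt k" using wt_attained by blast
  have "w i + w j \<le> w k" using w(1) a unfolding weight_ok_def by blast
  thus ?thesis using wt_le[OF w(1), of i] wt_le[OF w(1), of j] w(2) by linarith
qed

lemma wt_e: "i \<in> {1..n} \<Longrightarrow> k \<in> {i<..n} \<Longrightarrow> r i \<noteq> None \<Longrightarrow> e i k \<noteq> 0 \<Longrightarrow> wt i \<le> wt k"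
proof -
  assume a: "i \<in> {1..n}" "k \<in> {i<..n}" "r i \<noteq> None" "e i k \<noteq> 0"
  obtain w where w: "weight_ok n r e b w" "w k = wt k" using wt_attained by blast
  have "w i \<le> w k" using w(1) a unfolding weight_ok_def by blast
  thus ?thesis using wt_le[OF w(1), of i] w(2) by linarith
qed

lemma wt_d: "t \<in> {1..n} \<Longrightarrow> wt t \<le> dd"
  unfolding max_weight_def by (rule Max_ge) auto

definition HW :: "nat \<Rightarrow> (nat \<Rightarrow> 'r) \<Rightarrow> bool" where
  "HW A z \<longleftrightarrow> (\<forall>t. z t \<noteq> 0 \<longrightarrow> t \<in> {1..n} \<and> A \<le> wt t)"

lemma HW_gen: "i \<in> {1..n} \<Longrightarrow> HW (wt i) (gen_lin i)"
  by (auto simp: HW_def gen_lin_def)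

lemma HW_scale: "HW A z \<Longrightarrow> HW A (scale_lin c z)"
  unfolding HW_def scale_lin_def by (metis mult_zero_right)

lemma HW_mul:
  assumes u: "HW A u" and v: "HW B v"
  shows "HW (A + B) (mul_lin n b u v)"
  unfolding HW_def
proof (intro allI impI)
  fix t assume nz: "mul_lin n b u v t \<noteq> 0"
  have t: "1 \<le> t \<and> t \<le> n"
  proof (rule ccontr)
    assume nt: "\<not> (1 \<le> t \<and> t \<le> n)"
    have "mul_lin n b u v t = 0" unfolding mul_lin_def by (simp only: if_not_P[OF nt])
    with nz show False by simp
  qed
  have "mul_lin n b u v t = (\<Sum>j\<in>{1..n}. \<Sum>i\<in>{1..n}. if max i j < t then u j * v i * b i j t else 0)"
    unfolding mul_lin_def by (simp only: if_P[OF t])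
  hence "(\<Sum>j\<in>{1..n}. \<Sum>i\<in>{1..n}. if max i j < t then u j * v i * b i j t else 0) \<noteq> 0"
    using nz by argo
  then obtain j where j: "j \<in> {1..n}" "(\<Sum>i\<in>{1..n}. if max i j < t then u j * v i * b i j t else 0) \<noteq> 0"
    by (rule sum.not_neutral_contains_not_neutral)
  from j(2) obtain i where i: "i \<in> {1..n}" "(if max i j < t then u j * v i * b i j t else 0) \<noteq> 0"
    by (rule sum.not_neutral_contains_not_neutral)
  hence m: "max i j < t" "u j \<noteq> 0" "v i \<noteq> 0" "b i j t \<noteq> 0" by (auto split: if_splits)
  have "A \<le> wt j" "B \<le> wt i" using u v m by (auto simp: HW_def)
  moreover have "wt i + wt j \<le> wt t" using wt_b[of i j t] i j m t by auto
  ultimately show "t \<in> {1..n} \<and> A + B \<le> wt t" using t by auto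
qed

lemma HW_step: "l \<in> {1..n} \<Longrightarrow> HW A z \<Longrightarrow> HW A (red_step n r e l z)"
proof -
  assume l: "l \<in> {1..n}" and z: "HW A z"
  show ?thesis
  proof (cases "z l = 0")
    case True thus ?thesis using l z by (simp add: red_step_triv)
  next
    case False
    hence zl: "A \<le> wt l" using z by (auto simp: HW_def)
    show ?thesis
    proof (cases "r l")
      case None thus ?thesis using z by (simp add: red_step_def)
    next
      case (Some m)
      show ?thesis unfolding HW_def
      proof (intro allI impI)
        fix t assume nz: "red_step n r e l z t \<noteq> 0"
        show "t \<in> {1..n} \<and> A \<le> wt t"
        proof (cases "t = l")
          case True thus ?thesis using l zl by simp
        next
          case tl: False
          show ?thesis
          proof (cases "l < t \<and> t \<le> n")
            case True
            hence "z t \<noteq> 0 \<or> e l t \<noteq> 0" using nz tl by (auto simp: red_step_def Some)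
            thus ?thesis
            proof
              assume "z t \<noteq> 0" thus ?thesis using z by (auto simp: HW_def)
            next
              assume "e l t \<noteq> 0"
              hence "wt l \<le> wt t" using wt_e[of l t] l True Some by auto
              thus ?thesis using zl True l by auto
            qed
          next
            case False
            hence "z t \<noteq> 0" using nz tl by (auto simp: red_step_def Some)
            thus ?thesis using z by (auto simp: HW_def)
          qed
        qed
      qed
    qed
  qed
qed

lemma HW_fold: "\<forall>l\<in>set ls. l \<in> {1..n} \<Longrightarrow> HW A z \<Longrightarrow> HW A (fold (red_step n r e) ls z)"
  by (induction ls arbitrary: z) (auto simp: HW_step)

lemma HW_collect: "HW A z \<Longrightarrow> HW A (collect_lin n r e z)"
  unfolding collect_lin_def by (rule HW_fold) auto

lemma HW_big: "dd < A \<Longrightarrow> HW A z \<Longrightarrow> z = (\<lambda>_. 0)"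
  by (rule ext, rule ccontr) (use wt_d in \<open>force simp: HW_def\<close>)

lemma t1: "i \<in> {1..n} \<Longrightarrow> j \<in> {1..n} \<Longrightarrow> k \<in> {1..n} \<Longrightarrow>
        c_mul n r e b (gen_lin k) (c_mul n r e b (gen_lin j) (gen_lin i))
        = c_mul n r e b (c_mul n r e b (gen_lin k) (gen_lin j)) (gen_lin i)"
proof (cases "wt k + wt j + wt i \<le> dd")
  case True
  assume "i \<in> {1..n}" "j \<in> {1..n}" "k \<in> {1..n}"
  thus ?thesis using test1 True by blast
next
  case False
  assume a: "i \<in> {1..n}" "j \<in> {1..n}" "k \<in> {1..n}"
  have "HW (wt k + (wt j + wt i)) (c_mul n r e b (gen_lin k) (c_mul n r e b (gen_lin j) (gen_lin i)))"
    unfolding c_mul_def using a by (intro HW_collect HW_mul HW_gen) auto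
  moreover have "HW (wt k + wt j + wt i) (c_mul n r e b (c_mul n r e b (gen_lin k) (gen_lin j)) (gen_lin i))"
    unfolding c_mul_def using a by (intro HW_collect HW_mul HW_gen) auto
  ultimately show ?thesis using False HW_big by (metis add.assoc not_le)
qed

lemma t2: "i \<in> {1..n} \<Longrightarrow> j \<in> {1..n} \<Longrightarrow> r j = Some m \<Longrightarrow>
        c_scale n r e m (c_mul n r e b (gen_lin j) (gen_lin i))
        = c_mul n r e b (c_scale n r e m (gen_lin j)) (gen_lin i)"
proof (cases "wt j + wt i \<le> dd")
  case True
  assume "i \<in> {1..n}" "j \<in> {1..n}" "r j = Some m"
  thus ?thesis using test2 True by blast
next
  case False
  assume a: "i \<in> {1..n}" "j \<in> {1..n}" "r j = Some m"
  have "HW (wt j + wt i) (c_scale n r e m (c_mul n r e b (gen_lin j) (gen_lin i)))"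
    unfolding c_mul_def c_scale_def using a by (intro HW_collect HW_mul HW_gen HW_scale) auto
  moreover have "HW (wt j + wt i) (c_mul n r e b (c_scale n r e m (gen_lin j)) (gen_lin i))"
    unfolding c_mul_def c_scale_def using a by (intro HW_collect HW_mul HW_gen HW_scale) auto
  ultimately show ?thesis using False HW_big by (metis not_le)
qed

lemma t3: "i \<in> {1..n} \<Longrightarrow> j \<in> {1..n} \<Longrightarrow> r i = Some m \<Longrightarrow>
        c_scale n r e m (c_mul n r e b (gen_lin j) (gen_lin i))
        = c_mul n r e b (gen_lin j) (c_scale n r e m (gen_lin i))"
proof (cases "wt j + wt i \<le> dd")
  case True
  assume "i \<in> {1..n}" "j \<in> {1..n}" "r i = Some m"
  thus ?thesis using test3 True by blast
next
  case False
  assume a: "i \<in> {1..n}" "j \<in> {1..n}" "r i = Some m"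
  have "HW (wt j + wt i) (c_scale n r e m (c_mul n r e b (gen_lin j) (gen_lin i)))"
    unfolding c_mul_def c_scale_def using a by (intro HW_collect HW_mul HW_gen HW_scale) auto
  moreover have "HW (wt j + wt i) (c_mul n r e b (gen_lin j) (c_scale n r e m (gen_lin i)))"
    unfolding c_mul_def c_scale_def using a by (intro HW_collect HW_mul HW_gen HW_scale) auto
  ultimately show ?thesis using False HW_big by (metis not_le)
qed

end



lemma W2_sum: "(\<And>x. x \<in> A \<Longrightarrow> W2 n (f x)) \<Longrightarrow> W2 n (sum f A)"
  unfolding W2_def
proof (intro ballI)
  fix u assume h: "\<And>x. x \<in> A \<Longrightarrow> \<forall>u\<in>Poly_Mapping.keys (f x). set u \<subseteq> {2..n}"
    and u: "u \<in> Poly_Mapping.keys (sum f A)"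
  hence "(\<Sum>x\<in>A. Poly_Mapping.lookup (f x) u) \<noteq> 0" by (simp add: in_keys_iff lookup_sum)
  then obtain x where "x \<in> A" "Poly_Mapping.lookup (f x) u \<noteq> 0"
    by (rule sum.not_neutral_contains_not_neutral)
  thus "set u \<subseteq> {2..n}" using h by (auto simp: in_keys_iff)
qed

lemma W2_single: "set u \<subseteq> {2..n} \<Longrightarrow> W2 n (Poly_Mapping.single u c)"
  by (simp add: W2_def)

lemma W2_linpoly: "W2 n (linpoly n 2 z)"
  unfolding linpoly_def by (rule W2_sum) (auto intro: W2_single)

definition Bm :: "nat \<Rightarrow> (nat \<Rightarrow> nat \<Rightarrow> nat \<Rightarrow> 'r::comm_ring_1) \<Rightarrow> nat \<Rightarrow> nat \<Rightarrow> 'r ncpoly" where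
  "Bm n b i j = (\<Sum>l\<in>{max i j<..n}. Poly_Mapping.single [l] (b i j l))"

lemma W2_Bm: "1 \<le> i \<Longrightarrow> W2 n (Bm n b i j)"
  unfolding Bm_def by (rule W2_sum) (auto intro: W2_single)

lemma tauL_gen_Bm: "tauL_gen n b j = Bm n b j 1" by (simp add: tauL_gen_def Bm_def)
lemma tauR_gen_Bm: "tauR_gen n b j = Bm n b 1 j" by (simp add: tauR_gen_def Bm_def)
lemma s_elem_Bm: "s_elem n b = Bm n b 1 1" by (simp add: s_elem_def Bm_def)

lemma MUL_inner:
  assumes "i \<in> {1..n}" "j \<in> {1..n}"
  shows "(\<Sum>l\<in>{2..n}. Poly_Mapping.single [l] (if max i j < l then c * b i j l else 0)) = ncsc c (Bm n b i j)"
proof -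
  have "(\<Sum>l\<in>{2..n}. Poly_Mapping.single [l] (if max i j < l then c * b i j l else 0))
      = (\<Sum>l\<in>{2..n}. if l \<in> {max i j<..n} then Poly_Mapping.single [l] (c * b i j l) else 0)"
    by (rule sum.cong) auto
  also have "\<dots> = (\<Sum>l\<in>{2..n} \<inter> {max i j<..n}. Poly_Mapping.single [l] (c * b i j l))"
    by (simp add: sum.inter_restrict)
  also have "{2..n} \<inter> {max i j<..n} = {max i j<..n}" using assms by auto
  finally show ?thesis by (simp add: Bm_def ncsc_sum ncsc_single)
qed

lemma MUL: "linpoly n 2 (mul_lin n b u v) = (\<Sum>j\<in>{1..n}. \<Sum>i\<in>{1..n}. ncsc (u j * v i) (Bm n b i j))"
proof -
  have "linpoly n 2 (mul_lin n b u v) = (\<Sum>l\<in>{2..n}. \<Sum>j\<in>{1..n}. \<Sum>i\<in>{1..n}.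
      Poly_Mapping.single [l] (if max i j < l then u j * v i * b i j l else 0))"
    unfolding linpoly_def
  proof (rule sum.cong[OF refl])
    fix l assume l: "l \<in> {2..n}"
    have "mul_lin n b u v l = (\<Sum>j\<in>{1..n}. \<Sum>i\<in>{1..n}. if max i j < l then u j * v i * b i j l else 0)"
      unfolding mul_lin_def using l by (subst if_P) auto
    thus "Poly_Mapping.single [l] (mul_lin n b u v l) = (\<Sum>j\<in>{1..n}. \<Sum>i\<in>{1..n}.
      Poly_Mapping.single [l] (if max i j < l then u j * v i * b i j l else 0))"
      by (simp only: single_sum)
  qed
  also have "\<dots> = (\<Sum>j\<in>{1..n}. \<Sum>l\<in>{2..n}. \<Sum>i\<in>{1..n}.
      Poly_Mapping.single [l] (if max i j < l then u j * v i * b i j l else 0))"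
    by (rule sum.swap)
  also have "\<dots> = (\<Sum>j\<in>{1..n}. \<Sum>i\<in>{1..n}. \<Sum>l\<in>{2..n}.
      Poly_Mapping.single [l] (if max i j < l then u j * v i * b i j l else 0))"
    by (rule sum.cong[OF refl], rule sum.swap)
  also have "\<dots> = (\<Sum>j\<in>{1..n}. \<Sum>i\<in>{1..n}. ncsc (u j * v i) (Bm n b i j))"
    by (intro sum.cong refl MUL_inner) auto
  finally show ?thesis .
qed

lemma MUL_gen: "i \<in> {1..n} \<Longrightarrow> j \<in> {1..n} \<Longrightarrow> linpoly n 2 (mul_lin n b (gen_lin j) (gen_lin i)) = Bm n b i j"
proof -
  assume i: "i \<in> {1..n}" and j: "j \<in> {1..n}"
  have pw: "ncsc (gen_lin j j' * gen_lin i i') (Bm n b i' j') = (if j' = j then (if i' = i then Bm n b i j else 0) else 0)" for i' j'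
    by (simp add: gen_lin_def)
  have "(\<Sum>j'\<in>{1..n}. \<Sum>i'\<in>{1..n}. ncsc (gen_lin j j' * gen_lin i i') (Bm n b i' j'))
      = (\<Sum>j'\<in>{1..n}. if j' = j then (\<Sum>i'\<in>{1..n}. if i' = i then Bm n b i j else 0) else 0)"
    unfolding pw by (intro sum.cong refl) auto
  also have "\<dots> = Bm n b i j" using i j by simp
  finally show ?thesis by (simp add: MUL)
qed

lemma Zlt_mul: "Zlt 2 (mul_lin n b u v)"
  unfolding Zlt_def
proof (intro allI impI)
  fix t :: nat assume "t < 2"
  hence "t = 0 \<or> t = 1" by auto
  thus "mul_lin n b u v t = 0"
  proof
    assume "t = 0" thus ?thesis by (simp add: mul_lin_def)
  next
    assume t: "t = 1"
    have "(\<Sum>j\<in>{1..n}. \<Sum>i\<in>{1..n}. if max i j < t then u j * v i * b i j t else 0) = 0"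
      using t by (intro sum.neutral ballI) auto
    thus ?thesis by (simp add: mul_lin_def)
  qed
qed

lemma Zlt_gen: "2 \<le> j \<Longrightarrow> Zlt 2 (gen_lin j)" by (auto simp: Zlt_def gen_lin_def)
lemma Zlt_scale: "Zlt i0 z \<Longrightarrow> Zlt i0 (scale_lin c z)" by (auto simp: Zlt_def scale_lin_def)

lemma L_gen: "j \<in> {2..n} \<Longrightarrow> linpoly n 2 (gen_lin j) = Poly_Mapping.single [j] 1"
proof -
  assume j: "j \<in> {2..n}"
  have "linpoly n 2 (gen_lin j) = (\<Sum>l\<in>{2..n}. if l = j then Poly_Mapping.single [j] 1 else 0)"
    unfolding linpoly_def by (rule sum.cong) (auto simp: gen_lin_def)
  thus ?thesis using j by simp
qed

lemma L_scale: "linpoly n 2 (scale_lin c z) = ncsc c (linpoly n 2 z)"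
  by (simp add: linpoly_def scale_lin_def ncsc_sum ncsc_single)

lemma L_Phi: "linpoly n 2 z = Phi n (\<lambda>l. Poly_Mapping.single [l] 1) z"
  by (simp add: linpoly_def Phi_def ncsc_single)

lemma Phi_Zlt: "Zlt 2 z \<Longrightarrow> Phi n g z = (\<Sum>l\<in>{1..n}. ncsc (z l) (g l))"
  unfolding Phi_def by (rule sum.mono_neutral_left) (auto simp: Zlt_def)

lemma tauL_L: "tauL n b (linpoly n 2 z) = Phi n (tauL_gen n b) z"
  by (simp add: linpoly_def Phi_def lin_sum[OF lin_tauL] tauL_single ncmul_nil_right)

lemma tauR_L: "tauR n b (linpoly n 2 z) = Phi n (tauR_gen n b) z"
  by (simp add: linpoly_def Phi_def lin_sum[OF lin_tauR] tauR_single ncmul_nil_left)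

lemma mul1_left: "Zlt 2 z \<Longrightarrow> linpoly n 2 (mul_lin n b (gen_lin 1) z) = Phi n (tauL_gen n b) z"
proof -
  assume z: "Zlt 2 z"
  have "(\<Sum>j\<in>{1..n}. \<Sum>i\<in>{1..n}. ncsc (gen_lin 1 j * z i) (Bm n b i j))
     = (\<Sum>j\<in>{1..n}. if j = 1 then (\<Sum>i\<in>{1..n}. ncsc (z i) (Bm n b i 1)) else 0)"
    by (intro sum.cong refl) (auto simp: gen_lin_def)
  also have "\<dots> = (\<Sum>i\<in>{1..n}. ncsc (z i) (Bm n b i 1))"
    by (cases "1 \<le> n") auto
  also have "\<dots> = Phi n (tauL_gen n b) z" using z by (simp add: Phi_Zlt tauL_gen_Bm)
  finally show ?thesis by (simp add: MUL)
qed

lemma mul1_right: "Zlt 2 z \<Longrightarrow> linpoly n 2 (mul_lin n b z (gen_lin 1)) = Phi n (tauR_gen n b) z"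
proof -
  assume z: "Zlt 2 z"
  have "(\<Sum>j\<in>{1..n}. \<Sum>i\<in>{1..n}. ncsc (z j * gen_lin 1 i) (Bm n b i j))
     = (\<Sum>j\<in>{1..n}. (\<Sum>i\<in>{1..n}. if i = 1 then ncsc (z j) (Bm n b 1 j) else 0))"
    by (intro sum.cong refl) (auto simp: gen_lin_def)
  also have "\<dots> = (\<Sum>j\<in>{1..n}. ncsc (z j) (Bm n b 1 j))"
    by (intro sum.cong refl) (cases "1 \<le> n", auto)
  also have "\<dots> = Phi n (tauR_gen n b) z" using z by (simp add: Phi_Zlt tauR_gen_Bm)
  finally show ?thesis by (simp add: MUL)
qed

definition evec :: "nat \<Rightarrow> (nat \<Rightarrow> nat \<Rightarrow> 'r::comm_ring_1) \<Rightarrow> nat \<Rightarrow> nat \<Rightarrow> 'r" where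
  "evec n e i = (\<lambda>t. if i < t \<and> t \<le> n then e i t else 0)"

lemma Zlt_evec: "Zlt (Suc i) (evec n e i)" by (auto simp: Zlt_def evec_def)

lemma Phi_evec: "1 \<le> i \<Longrightarrow> Phi n g (evec n e i) = (\<Sum>t\<in>{i<..n}. ncsc (e i t) (g t))"
proof -
  assume i: "1 \<le> i"
  have "Phi n g (evec n e i) = (\<Sum>t\<in>{2..n}. if t \<in> {i<..n} then ncsc (e i t) (g t) else 0)"
    unfolding Phi_def by (rule sum.cong) (auto simp: evec_def)
  also have "\<dots> = (\<Sum>t\<in>{2..n} \<inter> {i<..n}. ncsc (e i t) (g t))" by (simp add: sum.inter_restrict)
  also have "{2..n} \<inter> {i<..n} = {i<..n}" using i by auto
  finally show ?thesis .
qed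

lemma L_evec1: "linpoly n 2 (evec n e 1) = p_elem n e"
  by (simp add: L_Phi Phi_evec p_elem_def ncsc_single)

context L23
begin

abbreviation eqv :: "'r ncpoly \<Rightarrow> 'r ncpoly \<Rightarrow> bool" where
  "eqv p q \<equiv> p - q \<in> II n r e b"

lemma eqv_refl: "eqv p p" by (simp add: I_zero)
lemma eqv_eq: "p = q \<Longrightarrow> eqv p q" by (simp add: I_zero)
lemma eqv_sym: "eqv p q \<Longrightarrow> eqv q p" by (metis I_uminus minus_diff_eq)
lemma eqv_trans: "eqv p q \<Longrightarrow> eqv q s \<Longrightarrow> eqv p s"
proof -
  assume a: "eqv p q" "eqv q s"
  have "p - s = (p - q) + (q - s)" by simp
  thus ?thesis using I_add[OF a] by simp
qed
lemma eqv_ncsc: "eqv p q \<Longrightarrow> eqv (ncsc c p) (ncsc c q)" by (metis I_ncsc ncsc_diff)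
lemma eqv_rmul: "W2 n s \<Longrightarrow> eqv p q \<Longrightarrow> eqv (ncmul p s) (ncmul q s)" by (metis I_rmul ncmul_diff_left)
lemma eqv_lmul: "W2 n s \<Longrightarrow> eqv p q \<Longrightarrow> eqv (ncmul s p) (ncmul s q)" by (metis I_lmul ncmul_diff_right)

lemma M: "Zlt 2 u \<Longrightarrow> Zlt 2 v \<Longrightarrow> eqv (linpoly n 2 (mul_lin n b u v)) (ncmul (linpoly n 2 u) (linpoly n 2 v))"
proof -
  assume u: "Zlt 2 u" and v: "Zlt 2 v"
  have s1: "(\<Sum>j\<in>{1..n}. \<Sum>i\<in>{1..n}. ncsc (u j * v i) (Bm n b i j))
      = (\<Sum>j\<in>{2..n}. \<Sum>i\<in>{2..n}. ncsc (u j * v i) (Bm n b i j))"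
  proof -
    have "(\<Sum>j\<in>{1..n}. \<Sum>i\<in>{1..n}. ncsc (u j * v i) (Bm n b i j))
      = (\<Sum>j\<in>{2..n}. \<Sum>i\<in>{1..n}. ncsc (u j * v i) (Bm n b i j))"
      by (rule sum.mono_neutral_right) (use u in \<open>auto simp: Zlt_def\<close>)
    also have "\<dots> = (\<Sum>j\<in>{2..n}. \<Sum>i\<in>{2..n}. ncsc (u j * v i) (Bm n b i j))"
      by (intro sum.cong refl sum.mono_neutral_right) (use v in \<open>auto simp: Zlt_def\<close>)
    finally show ?thesis .
  qed
  have s2: "ncmul (linpoly n 2 u) (linpoly n 2 v)
      = (\<Sum>j\<in>{2..n}. \<Sum>i\<in>{2..n}. ncsc (u j * v i) (Poly_Mapping.single [j, i] 1))"
    apply (simp add: linpoly_def ncmul_sum_left ncmul_sum_right ncmul_single_single ncsc_single)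
    apply (rule sum.swap)
    done
  have "linpoly n 2 (mul_lin n b u v) - ncmul (linpoly n 2 u) (linpoly n 2 v)
     = (\<Sum>j\<in>{2..n}. \<Sum>i\<in>{2..n}. ncsc (u j * v i) (Bm n b i j - Poly_Mapping.single [j, i] 1))"
    unfolding MUL s1 s2 by (simp add: ncsc_diff sum_subtractf)
  also have "\<dots> \<in> II n r e b"
  proof (intro I_sum I_ncsc)
    fix j i assume j: "j \<in> {2..n}" and i: "i \<in> {2..n}"
    have "Poly_Mapping.single [j, i] 1 - Bm n b i j \<in> pres_rels n r e b 2"
      unfolding pres_rels_def Bm_def using i j by blast
    hence "Poly_Mapping.single [j, i] 1 - Bm n b i j \<in> II n r e b" by (rule pres_ideal.rel)
    thus "Bm n b i j - Poly_Mapping.single [j, i] 1 \<in> II n r e b" by (metis I_uminus minus_diff_eq)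
  qed
  finally show ?thesis .
qed

lemma Cond_sg: "Cond (\<lambda>l. Poly_Mapping.single [l] 1) 2"
  unfolding Cond_def
proof (intro allI impI)
  fix l m assume l: "2 \<le> l" "l \<le> n" "r l = Some m"
  have "Poly_Mapping.single [l] (of_nat m) - (\<Sum>t\<in>{l<..n}. Poly_Mapping.single [t] (e l t)) \<in> pres_rels n r e b 2"
    unfolding pres_rels_def using l by auto
  thus "ncsc (of_nat m) (Poly_Mapping.single [l] 1) - (\<Sum>t\<in>{l<..n}. ncsc (e l t) (Poly_Mapping.single [t] 1)) \<in> II n r e b"
    by (simp add: ncsc_single pres_ideal.rel)
qed

lemma collect_L: "Zlt 2 z \<Longrightarrow> eqv (linpoly n 2 (collect_lin n r e z)) (linpoly n 2 z)"
  unfolding L_Phi by (rule collect_Phi[OF _ Cond_sg]) auto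

lemma fold_id: "\<forall>l\<in>set ls. l \<in> {1..n} \<and> l < i0 \<Longrightarrow> Zlt i0 z \<Longrightarrow> fold (red_step n r e) ls z = z"
  by (induction ls) (auto simp: red_step_triv Zlt_def)

lemma collect_scale_gen:
  assumes i: "i \<in> {1..n}" and m: "r i = Some m"
  shows "collect_lin n r e (scale_lin (of_nat m) (gen_lin i)) = collect_lin n r e (evec n e i)"
proof -
  have sp: "[1..<Suc n] = [1..<i] @ i # [Suc i..<Suc n]"
    using i upt_add_eq_append[of 1 i "Suc n - i"] upt_conv_Cons[of i "Suc n"] by auto
  have Z1: "Zlt i (scale_lin (of_nat m :: 'r) (gen_lin i))" by (auto simp: Zlt_def scale_lin_def gen_lin_def)
  have Z2: "Zlt i (evec n e i)" by (auto simp: Zlt_def evec_def)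
  have f1: "fold (red_step n r e) [1..<i] (scale_lin (of_nat m :: 'r) (gen_lin i)) = scale_lin (of_nat m) (gen_lin i)"
    by (rule fold_id[OF _ Z1]) (use i in auto)
  have f2: "fold (red_step n r e) [1..<i] (evec n e i) = evec n e i"
    by (rule fold_id[OF _ Z2]) (use i in auto)
  have bz: "bij (of_int :: int \<Rightarrow> 'r)" "m > 0" using Zcase[OF i m] by auto
  have r1: "red_step n r e i (scale_lin (of_nat m :: 'r) (gen_lin i)) = evec n e i"
    using rem_m[OF bz] by (auto simp: red_step_def m scale_lin_def gen_lin_def evec_def fun_eq_iff)
  have r2: "red_step n r e i (evec n e i) = evec n e i"
    using i by (intro red_step_triv) (auto simp: evec_def)
  show ?thesis unfolding collect_lin_def sp by (simp only: fold_append fold_simps comp_apply f1 f2 r1 r2)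
qed

end



lemma keys_sum_sub: "Poly_Mapping.keys (sum f A) \<subseteq> (\<Union>x\<in>A. Poly_Mapping.keys (f x))"
proof
  fix u assume u: "u \<in> Poly_Mapping.keys (sum f A)"
  hence "(\<Sum>x\<in>A. Poly_Mapping.lookup (f x) u) \<noteq> 0" by (simp add: in_keys_iff lookup_sum)
  then obtain x where "x \<in> A" "Poly_Mapping.lookup (f x) u \<noteq> 0"
    by (rule sum.not_neutral_contains_not_neutral)
  thus "u \<in> (\<Union>x\<in>A. Poly_Mapping.keys (f x))" by (auto simp: in_keys_iff)
qed

lemma NE_Bm: "\<forall>w\<in>Poly_Mapping.keys (Bm n b i j). w \<noteq> []"
  using keys_sum_sub[of "\<lambda>l. Poly_Mapping.single [l] (b i j l)" "{max i j<..n}"]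
  unfolding Bm_def by (auto split: if_splits)

lemma NE_single: "u \<noteq> [] \<Longrightarrow> \<forall>w\<in>Poly_Mapping.keys (Poly_Mapping.single u c). w \<noteq> []"
  by simp

lemma Zlt_mono: "Zlt a z \<Longrightarrow> b \<le> a \<Longrightarrow> Zlt b z" by (auto simp: Zlt_def)

context L23
begin

abbreviation "gL \<equiv> tauL_gen n b"
abbreviation "gR \<equiv> tauR_gen n b"
abbreviation "LL \<equiv> linpoly n 2"
abbreviation "g1 \<equiv> (gen_lin 1 :: nat \<Rightarrow> 'r)"

lemma L_tLv: "j \<in> {1..n} \<Longrightarrow> LL (mul_lin n b g1 (gen_lin j)) = gL j"
  using n1 by (simp add: MUL_gen tauL_gen_Bm)
lemma L_tRv: "j \<in> {1..n} \<Longrightarrow> LL (mul_lin n b (gen_lin j) g1) = gR j"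
  using n1 by (simp add: MUL_gen tauR_gen_Bm)
lemma L_sv: "LL (mul_lin n b g1 g1) = s_elem n b"
  using n1 by (simp add: MUL_gen s_elem_Bm)

lemma W2_Bm': "1 \<le> max i j \<Longrightarrow> W2 n (Bm n b i j)"
  unfolding Bm_def by (rule W2_sum) (auto intro: W2_single)
lemma W2_gL: "W2 n (gL j)" by (simp add: tauL_gen_Bm W2_Bm')
lemma W2_gR: "W2 n (gR j)" by (simp add: tauR_gen_Bm W2_Bm')

lemma eqv_via: "X = Y \<Longrightarrow> eqv (LL X) A \<Longrightarrow> eqv (LL Y) B \<Longrightarrow> eqv A B"
proof -
  assume h: "X = Y" "eqv (LL X) A" "eqv (LL Y) B"
  from h(2) have "eqv (LL Y) A" using h(1) by simp
  from eqv_trans[OF eqv_sym[OF this] h(3)] show ?thesis .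
qed

lemma SC: "Zlt 2 w \<Longrightarrow> eqv (LL (collect_lin n r e (scale_lin c (collect_lin n r e w)))) (ncsc c (LL w))"
proof -
  assume w: "Zlt 2 w"
  have "eqv (LL (collect_lin n r e (scale_lin c (collect_lin n r e w)))) (LL (scale_lin c (collect_lin n r e w)))"
    by (intro collect_L Zlt_scale collect_Zlt w)
  moreover have "eqv (LL (scale_lin c (collect_lin n r e w))) (ncsc c (LL w))"
    unfolding L_scale by (intro eqv_ncsc collect_L w)
  ultimately show ?thesis by (rule eqv_trans)
qed

lemma LM: "Zlt 2 w \<Longrightarrow> j \<in> {2..n} \<Longrightarrow>
   eqv (LL (collect_lin n r e (mul_lin n b (collect_lin n r e w) (gen_lin j)))) (ncmul (LL w) (Poly_Mapping.single [j] 1))"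
proof -
  assume w: "Zlt 2 w" and j: "j \<in> {2..n}"
  have "eqv (LL (collect_lin n r e (mul_lin n b (collect_lin n r e w) (gen_lin j)))) (LL (mul_lin n b (collect_lin n r e w) (gen_lin j)))"
    by (intro collect_L Zlt_mul)
  moreover have "eqv (LL (mul_lin n b (collect_lin n r e w) (gen_lin j))) (ncmul (LL (collect_lin n r e w)) (LL (gen_lin j)))"
    using j by (intro M collect_Zlt w Zlt_gen) auto
  moreover have "eqv (ncmul (LL (collect_lin n r e w)) (LL (gen_lin j))) (ncmul (LL w) (Poly_Mapping.single [j] 1))"
    unfolding L_gen[OF j] using j by (intro eqv_rmul W2_single collect_L w) auto
  ultimately show ?thesis by (rule eqv_trans[OF eqv_trans])
qed

lemma RM: "Zlt 2 w \<Longrightarrow> j \<in> {2..n} \<Longrightarrow>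
   eqv (LL (collect_lin n r e (mul_lin n b (gen_lin j) (collect_lin n r e w)))) (ncmul (Poly_Mapping.single [j] 1) (LL w))"
proof -
  assume w: "Zlt 2 w" and j: "j \<in> {2..n}"
  have "eqv (LL (collect_lin n r e (mul_lin n b (gen_lin j) (collect_lin n r e w)))) (LL (mul_lin n b (gen_lin j) (collect_lin n r e w)))"
    by (intro collect_L Zlt_mul)
  moreover have "eqv (LL (mul_lin n b (gen_lin j) (collect_lin n r e w))) (ncmul (LL (gen_lin j)) (LL (collect_lin n r e w)))"
    using j by (intro M collect_Zlt w Zlt_gen) auto
  moreover have "eqv (ncmul (LL (gen_lin j)) (LL (collect_lin n r e w))) (ncmul (Poly_Mapping.single [j] 1) (LL w))"
    unfolding L_gen[OF j] using j by (intro eqv_lmul W2_single collect_L w) auto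
  ultimately show ?thesis by (rule eqv_trans[OF eqv_trans])
qed

lemma LA: "Cond gL 2 \<Longrightarrow> Zlt 2 w \<Longrightarrow>
   eqv (LL (collect_lin n r e (mul_lin n b g1 (collect_lin n r e w)))) (Phi n gL w)"
proof -
  assume C: "Cond gL 2" and w: "Zlt 2 w"
  have "eqv (LL (collect_lin n r e (mul_lin n b g1 (collect_lin n r e w)))) (LL (mul_lin n b g1 (collect_lin n r e w)))"
    by (intro collect_L Zlt_mul)
  moreover have e2: "LL (mul_lin n b g1 (collect_lin n r e w)) = Phi n gL (collect_lin n r e w)"
    by (intro mul1_left collect_Zlt w)
  ultimately have "eqv (LL (collect_lin n r e (mul_lin n b g1 (collect_lin n r e w)))) (Phi n gL (collect_lin n r e w))"
    by simp
  moreover have "eqv (Phi n gL (collect_lin n r e w)) (Phi n gL w)"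
    by (rule collect_Phi[OF _ C w]) simp
  ultimately show ?thesis by (rule eqv_trans)
qed

lemma RA: "Cond gR 2 \<Longrightarrow> Zlt 2 w \<Longrightarrow>
   eqv (LL (collect_lin n r e (mul_lin n b (collect_lin n r e w) g1))) (Phi n gR w)"
proof -
  assume C: "Cond gR 2" and w: "Zlt 2 w"
  have "eqv (LL (collect_lin n r e (mul_lin n b (collect_lin n r e w) g1))) (LL (mul_lin n b (collect_lin n r e w) g1))"
    by (intro collect_L Zlt_mul)
  moreover have e2: "LL (mul_lin n b (collect_lin n r e w) g1) = Phi n gR (collect_lin n r e w)"
    by (intro mul1_right collect_Zlt w)
  ultimately have "eqv (LL (collect_lin n r e (mul_lin n b (collect_lin n r e w) g1))) (Phi n gR (collect_lin n r e w))"
    by simp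
  moreover have "eqv (Phi n gR (collect_lin n r e w)) (Phi n gR w)"
    by (rule collect_Phi[OF _ C w]) simp
  ultimately show ?thesis by (rule eqv_trans)
qed

lemma Cond_down:
  assumes step: "\<And>i m. 2 \<le> i \<Longrightarrow> i \<le> n \<Longrightarrow> r i = Some m \<Longrightarrow> Cond g (Suc i) \<Longrightarrow>
     ncsc (of_nat m) (g i) - (\<Sum>t\<in>{i<..n}. ncsc (e i t) (g t)) \<in> II n r e b"
  shows "Cond g 2"
proof -
  have "Cond g (Suc n)" by (auto simp: Cond_def)
  have "2 \<le> Suc n" using n1 by simp
  thus ?thesis
  proof (induction rule: inc_induct)
    case base show ?case by (auto simp: Cond_def)
  next
    case (step k)
    show ?case unfolding Cond_def
    proof (intro allI impI)
      fix l m assume l: "k \<le> l" "l \<le> n" "r l = Some m"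
      show "ncsc (of_nat m) (g l) - (\<Sum>t\<in>{l<..n}. ncsc (e l t) (g t)) \<in> II n r e b"
      proof (cases "l = k")
        case True thus ?thesis using assms[of k m] step l by auto
      next
        case False thus ?thesis using step.IH l unfolding Cond_def by auto
      qed
    qed
  qed
qed

lemma CL: "Cond gL 2"
proof (rule Cond_down)
  fix i m assume i: "2 \<le> i" "i \<le> n" and m: "r i = Some m" and C: "Cond gL (Suc i)"
  have i1: "i \<in> {1..n}" using i by auto
  have eq: "c_scale n r e m (c_mul n r e b g1 (gen_lin i)) = c_mul n r e b g1 (c_scale n r e m (gen_lin i))"
    using t3[OF i1 _ m] n1 by auto
  have A: "eqv (LL (c_scale n r e m (c_mul n r e b g1 (gen_lin i)))) (ncsc (of_nat m) (gL i))"
    unfolding c_scale_def c_mul_def using SC[OF Zlt_mul[of n b g1 "gen_lin i"], where c="of_nat m"] L_tLv[OF i1] by simp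
  have Zc: "Zlt 2 (collect_lin n r e (evec n e i))"
    using i by (intro collect_Zlt Zlt_mono[OF Zlt_evec]) auto
  have B1: "eqv (LL (c_mul n r e b g1 (c_scale n r e m (gen_lin i)))) (LL (mul_lin n b g1 (collect_lin n r e (evec n e i))))"
    unfolding c_mul_def c_scale_def collect_scale_gen[OF i1 m] by (intro collect_L Zlt_mul)
  have B2: "LL (mul_lin n b g1 (collect_lin n r e (evec n e i))) = Phi n gL (collect_lin n r e (evec n e i))"
    by (rule mul1_left[OF Zc])
  have B3: "eqv (Phi n gL (collect_lin n r e (evec n e i))) (Phi n gL (evec n e i))"
    using i by (intro collect_Phi[OF _ C] Zlt_evec) auto
  have B4: "Phi n gL (evec n e i) = (\<Sum>t\<in>{i<..n}. ncsc (e i t) (gL t))"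
    using i by (intro Phi_evec) auto
  have "eqv (ncsc (of_nat m) (gL i)) (\<Sum>t\<in>{i<..n}. ncsc (e i t) (gL t))"
    using eqv_trans[OF eqv_trans[OF eqv_sym[OF A] eqv_eq[OF arg_cong[where f=LL, OF eq]]] eqv_trans[OF B1[unfolded B2] B3[unfolded B4]]] .
  thus "ncsc (of_nat m) (gL i) - (\<Sum>t\<in>{i<..n}. ncsc (e i t) (gL t)) \<in> II n r e b" .
qed

lemma CR: "Cond gR 2"
proof (rule Cond_down)
  fix i m assume i: "2 \<le> i" "i \<le> n" and m: "r i = Some m" and C: "Cond gR (Suc i)"
  have i1: "i \<in> {1..n}" using i by auto
  have eq: "c_scale n r e m (c_mul n r e b (gen_lin i) g1) = c_mul n r e b (c_scale n r e m (gen_lin i)) g1"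
    using t2[OF _ i1 m] n1 by auto
  have A: "eqv (LL (c_scale n r e m (c_mul n r e b (gen_lin i) g1))) (ncsc (of_nat m) (gR i))"
    unfolding c_scale_def c_mul_def using SC[OF Zlt_mul[of n b "gen_lin i" g1], where c="of_nat m"] L_tRv[OF i1] by simp
  have Zc: "Zlt 2 (collect_lin n r e (evec n e i))"
    using i by (intro collect_Zlt Zlt_mono[OF Zlt_evec]) auto
  have B1: "eqv (LL (c_mul n r e b (c_scale n r e m (gen_lin i)) g1)) (LL (mul_lin n b (collect_lin n r e (evec n e i)) g1))"
    unfolding c_mul_def c_scale_def collect_scale_gen[OF i1 m] by (intro collect_L Zlt_mul)
  have B2: "LL (mul_lin n b (collect_lin n r e (evec n e i)) g1) = Phi n gR (collect_lin n r e (evec n e i))"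
    by (rule mul1_right[OF Zc])
  have B3: "eqv (Phi n gR (collect_lin n r e (evec n e i))) (Phi n gR (evec n e i))"
    using i by (intro collect_Phi[OF _ C] Zlt_evec) auto
  have B4: "Phi n gR (evec n e i) = (\<Sum>t\<in>{i<..n}. ncsc (e i t) (gR t))"
    using i by (intro Phi_evec) auto
  have "eqv (ncsc (of_nat m) (gR i)) (\<Sum>t\<in>{i<..n}. ncsc (e i t) (gR t))"
    using eqv_trans[OF eqv_trans[OF eqv_sym[OF A] eqv_eq[OF arg_cong[where f=LL, OF eq]]] eqv_trans[OF B1[unfolded B2] B3[unfolded B4]]] .
  thus "ncsc (of_nat m) (gR i) - (\<Sum>t\<in>{i<..n}. ncsc (e i t) (gR t)) \<in> II n r e b" .
qed

end



context L23
begin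

lemma g1_in: "1 \<in> {1..n}" using n1 by simp

lemma NE_gL: "\<forall>w\<in>Poly_Mapping.keys (gL j). w \<noteq> []" by (simp add: tauL_gen_Bm NE_Bm)
lemma NE_gR: "\<forall>w\<in>Poly_Mapping.keys (gR j). w \<noteq> []" by (simp add: tauR_gen_Bm NE_Bm)

lemma PhiL_tLv: "j \<in> {1..n} \<Longrightarrow> Phi n gL (mul_lin n b g1 (gen_lin j)) = tauL n b (gL j)"
  by (simp only: tauL_L[symmetric] L_tLv)
lemma PhiL_tRv: "j \<in> {1..n} \<Longrightarrow> Phi n gL (mul_lin n b (gen_lin j) g1) = tauL n b (gR j)"
  by (simp only: tauL_L[symmetric] L_tRv)
lemma PhiR_tLv: "j \<in> {1..n} \<Longrightarrow> Phi n gR (mul_lin n b g1 (gen_lin j)) = tauR n b (gL j)"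
  by (simp only: tauR_L[symmetric] L_tLv)
lemma PhiR_tRv: "j \<in> {1..n} \<Longrightarrow> Phi n gR (mul_lin n b (gen_lin j) g1) = tauR n b (gR j)"
  by (simp only: tauR_L[symmetric] L_tRv)
lemma PhiL_sv: "Phi n gL (mul_lin n b g1 g1) = tauL n b (s_elem n b)"
  by (simp only: tauL_L[symmetric] L_sv)
lemma PhiR_sv: "Phi n gR (mul_lin n b g1 g1) = tauR n b (s_elem n b)"
  by (simp only: tauR_L[symmetric] L_sv)

lemma W_iiL: "j \<in> {2..n} \<Longrightarrow> eqv (tauL n b (gL j)) (ncmul (s_elem n b) (Poly_Mapping.single [j] 1))"
proof -
  assume j: "j \<in> {2..n}"
  hence j1: "j \<in> {1..n}" by auto
  have eq: "c_mul n r e b g1 (c_mul n r e b g1 (gen_lin j)) = c_mul n r e b (c_mul n r e b g1 g1) (gen_lin j)"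
    using t1[OF j1 g1_in g1_in] .
  have A: "eqv (LL (c_mul n r e b g1 (c_mul n r e b g1 (gen_lin j)))) (tauL n b (gL j))"
    unfolding c_mul_def using LA[OF CL Zlt_mul[of n b g1 "gen_lin j"]] PhiL_tLv[OF j1] by simp
  have B: "eqv (LL (c_mul n r e b (c_mul n r e b g1 g1) (gen_lin j))) (ncmul (s_elem n b) (Poly_Mapping.single [j] 1))"
    unfolding c_mul_def using LM[OF Zlt_mul[of n b g1 g1] j] L_sv by simp
  show ?thesis by (rule eqv_via[OF eq A B])
qed

lemma W_iiR: "j \<in> {2..n} \<Longrightarrow> eqv (tauR n b (gR j)) (ncmul (Poly_Mapping.single [j] 1) (s_elem n b))"
proof -
  assume j: "j \<in> {2..n}"
  hence j1: "j \<in> {1..n}" by auto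
  have eq: "c_mul n r e b (gen_lin j) (c_mul n r e b g1 g1) = c_mul n r e b (c_mul n r e b (gen_lin j) g1) g1"
    using t1[OF g1_in g1_in j1] .
  have A: "eqv (LL (c_mul n r e b (gen_lin j) (c_mul n r e b g1 g1))) (ncmul (Poly_Mapping.single [j] 1) (s_elem n b))"
    unfolding c_mul_def using RM[OF Zlt_mul[of n b g1 g1] j] L_sv by simp
  have B: "eqv (LL (c_mul n r e b (c_mul n r e b (gen_lin j) g1) g1)) (tauR n b (gR j))"
    unfolding c_mul_def using RA[OF CR Zlt_mul[of n b "gen_lin j" g1]] PhiR_tRv[OF j1] by simp
  show ?thesis by (rule eqv_sym[OF eqv_via[OF eq A B]])
qed

lemma W_iva: "j \<in> {2..n} \<Longrightarrow> k \<in> {2..n} \<Longrightarrow>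
   eqv (ncmul (gR j) (Poly_Mapping.single [k] 1)) (ncmul (Poly_Mapping.single [j] 1) (gL k))"
proof -
  assume j: "j \<in> {2..n}" and k: "k \<in> {2..n}"
  hence j1: "j \<in> {1..n}" and k1: "k \<in> {1..n}" by auto
  have eq: "c_mul n r e b (gen_lin j) (c_mul n r e b g1 (gen_lin k)) = c_mul n r e b (c_mul n r e b (gen_lin j) g1) (gen_lin k)"
    using t1[OF k1 g1_in j1] .
  have A: "eqv (LL (c_mul n r e b (gen_lin j) (c_mul n r e b g1 (gen_lin k)))) (ncmul (Poly_Mapping.single [j] 1) (gL k))"
    unfolding c_mul_def using RM[OF Zlt_mul[of n b g1 "gen_lin k"] j] L_tLv[OF k1] by simp
  have B: "eqv (LL (c_mul n r e b (c_mul n r e b (gen_lin j) g1) (gen_lin k))) (ncmul (gR j) (Poly_Mapping.single [k] 1))"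
    unfolding c_mul_def using LM[OF Zlt_mul[of n b "gen_lin j" g1] k] L_tRv[OF j1] by simp
  show ?thesis by (rule eqv_sym[OF eqv_via[OF eq A B]])
qed

lemma W_ivb: "j \<in> {2..n} \<Longrightarrow> eqv (tauL n b (gR j)) (tauR n b (gL j))"
proof -
  assume j: "j \<in> {2..n}"
  hence j1: "j \<in> {1..n}" by auto
  have eq: "c_mul n r e b g1 (c_mul n r e b (gen_lin j) g1) = c_mul n r e b (c_mul n r e b g1 (gen_lin j)) g1"
    using t1[OF g1_in j1 g1_in] .
  have A: "eqv (LL (c_mul n r e b g1 (c_mul n r e b (gen_lin j) g1))) (tauL n b (gR j))"
    unfolding c_mul_def using LA[OF CL Zlt_mul[of n b "gen_lin j" g1]] PhiL_tRv[OF j1] by simp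
  have B: "eqv (LL (c_mul n r e b (c_mul n r e b g1 (gen_lin j)) g1)) (tauR n b (gL j))"
    unfolding c_mul_def using RA[OF CR Zlt_mul[of n b g1 "gen_lin j"]] PhiR_tLv[OF j1] by simp
  show ?thesis by (rule eqv_via[OF eq A B])
qed

lemma W_i: "eqv (tauL n b (s_elem n b)) (tauR n b (s_elem n b))"
proof -
  have eq: "c_mul n r e b g1 (c_mul n r e b g1 g1) = c_mul n r e b (c_mul n r e b g1 g1) g1"
    using t1[OF g1_in g1_in g1_in] .
  have A: "eqv (LL (c_mul n r e b g1 (c_mul n r e b g1 g1))) (tauL n b (s_elem n b))"
    unfolding c_mul_def using LA[OF CL Zlt_mul[of n b g1 g1]] PhiL_sv by simp
  have B: "eqv (LL (c_mul n r e b (c_mul n r e b g1 g1) g1)) (tauR n b (s_elem n b))"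
    unfolding c_mul_def using RA[OF CR Zlt_mul[of n b g1 g1]] PhiR_sv by simp
  show ?thesis by (rule eqv_via[OF eq A B])
qed

lemma Zlt2_evec1: "Zlt 2 (evec n e 1)" by (auto simp: Zlt_def evec_def)

lemma W_v: "r 1 = Some m \<Longrightarrow> j \<in> {2..n} \<Longrightarrow>
   eqv (ncmul (p_elem n e) (Poly_Mapping.single [j] 1)) (ncsc (of_nat m) (gL j))"
proof -
  assume m: "r 1 = Some m" and j: "j \<in> {2..n}"
  hence j1: "j \<in> {1..n}" by auto
  have eq: "c_scale n r e m (c_mul n r e b g1 (gen_lin j)) = c_mul n r e b (c_scale n r e m g1) (gen_lin j)"
    using t2[OF j1 g1_in m] .
  have A: "eqv (LL (c_scale n r e m (c_mul n r e b g1 (gen_lin j)))) (ncsc (of_nat m) (gL j))"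
    unfolding c_mul_def c_scale_def using SC[OF Zlt_mul[of n b g1 "gen_lin j"], where c="of_nat m"] L_tLv[OF j1] by simp
  have B: "eqv (LL (c_mul n r e b (c_scale n r e m g1) (gen_lin j))) (ncmul (p_elem n e) (Poly_Mapping.single [j] 1))"
    unfolding c_mul_def c_scale_def collect_scale_gen[OF g1_in m] using LM[OF Zlt2_evec1 j] unfolding L_evec1 .
  show ?thesis by (rule eqv_sym[OF eqv_via[OF eq A B]])
qed

lemma W_vi: "r 1 = Some m \<Longrightarrow> j \<in> {2..n} \<Longrightarrow>
   eqv (ncmul (Poly_Mapping.single [j] 1) (p_elem n e)) (ncsc (of_nat m) (gR j))"
proof -
  assume m: "r 1 = Some m" and j: "j \<in> {2..n}"
  hence j1: "j \<in> {1..n}" by auto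
  have eq: "c_scale n r e m (c_mul n r e b (gen_lin j) g1) = c_mul n r e b (gen_lin j) (c_scale n r e m g1)"
    using t3[OF g1_in j1 m] .
  have A: "eqv (LL (c_scale n r e m (c_mul n r e b (gen_lin j) g1))) (ncsc (of_nat m) (gR j))"
    unfolding c_mul_def c_scale_def using SC[OF Zlt_mul[of n b "gen_lin j" g1], where c="of_nat m"] L_tRv[OF j1] by simp
  have B: "eqv (LL (c_mul n r e b (gen_lin j) (c_scale n r e m g1))) (ncmul (Poly_Mapping.single [j] 1) (p_elem n e))"
    unfolding c_mul_def c_scale_def collect_scale_gen[OF g1_in m] using RM[OF Zlt2_evec1 j] unfolding L_evec1 .
  show ?thesis by (rule eqv_sym[OF eqv_via[OF eq A B]])
qed

end



lemma single_cons: "Poly_Mapping.single (j # u) (1::'r::comm_ring_1) = ncmul (Poly_Mapping.single [j] 1) (Poly_Mapping.single u 1)"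
  by (simp add: ncmul_single_single)
lemma single_snoc: "Poly_Mapping.single (u @ [j]) (1::'r::comm_ring_1) = ncmul (Poly_Mapping.single u 1) (Poly_Mapping.single [j] 1)"
  by (simp add: ncmul_single_single)

lemma free_NE: "x \<in> free_alg n k \<Longrightarrow> \<forall>w\<in>Poly_Mapping.keys x. w \<noteq> []"
  by (simp add: free_alg_def)

context L23
begin

lemma reduce:
  "lin F \<Longrightarrow> lin G \<Longrightarrow> (\<And>u. u \<noteq> [] \<Longrightarrow> set u \<subseteq> {2..n} \<Longrightarrow> eqv (F (Poly_Mapping.single u 1)) (G (Poly_Mapping.single u 1)))
   \<Longrightarrow> x \<in> free_alg n 2 \<Longrightarrow> eqv (F x) (G x)"
  by (rule I_reduce)

lemma word_cons: "u \<noteq> [] \<Longrightarrow> set u \<subseteq> {2..n} \<Longrightarrow> \<exists>j u'. u = j # u' \<and> j \<in> {2..n} \<and> set u' \<subseteq> {2..n}"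
  by (cases u) auto
lemma word_snoc: "u \<noteq> [] \<Longrightarrow> set u \<subseteq> {2..n} \<Longrightarrow> \<exists>j u'. u = u' @ [j] \<and> j \<in> {2..n} \<and> set u' \<subseteq> {2..n}"
  by (cases u rule: rev_cases) auto

lemma P2L: "x \<in> free_alg n 2 \<Longrightarrow> eqv (tauL n b (tauL n b x)) (ncmul (s_elem n b) x)"
proof (rule reduce[where F="\<lambda>x. tauL n b (tauL n b x)" and G="\<lambda>x. ncmul (s_elem n b) x"])
  show "lin (\<lambda>x. tauL n b (tauL n b x))" by (rule lin_comp[OF lin_tauL lin_tauL])
  show "lin (\<lambda>x. ncmul (s_elem n b) x)" by (rule lin_ncmul_left)
next
  fix u assume "u \<noteq> []" "set u \<subseteq> {2..n}"
  then obtain j u' where u: "u = j # u'" "j \<in> {2..n}" "set u' \<subseteq> {2..n}" using word_cons by blast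
  have "tauL n b (tauL n b (Poly_Mapping.single u 1)) = ncmul (tauL n b (gL j)) (Poly_Mapping.single u' 1)"
    by (simp add: u tauL_single tauL_ncmul[OF NE_gL])
  moreover have "ncmul (s_elem n b) (Poly_Mapping.single u 1) = ncmul (ncmul (s_elem n b) (Poly_Mapping.single [j] 1)) (Poly_Mapping.single u' 1)"
    by (simp only: u single_cons[of j u'] ncmul_assoc)
  ultimately show "eqv (tauL n b (tauL n b (Poly_Mapping.single u 1))) (ncmul (s_elem n b) (Poly_Mapping.single u 1))"
    using eqv_rmul[OF W2_single[OF u(3)] W_iiL[OF u(2)]] by simp
qed

lemma P2R: "x \<in> free_alg n 2 \<Longrightarrow> eqv (tauR n b (tauR n b x)) (ncmul x (s_elem n b))"
proof (rule reduce[where F="\<lambda>x. tauR n b (tauR n b x)" and G="\<lambda>x. ncmul x (s_elem n b)"])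
  show "lin (\<lambda>x. tauR n b (tauR n b x))" by (rule lin_comp[OF lin_tauR lin_tauR])
  show "lin (\<lambda>x. ncmul x (s_elem n b))" by (rule lin_ncmul_right)
next
  fix u assume "u \<noteq> []" "set u \<subseteq> {2..n}"
  then obtain j u' where u: "u = u' @ [j]" "j \<in> {2..n}" "set u' \<subseteq> {2..n}" using word_snoc by blast
  have "tauR n b (tauR n b (Poly_Mapping.single u 1)) = ncmul (Poly_Mapping.single u' 1) (tauR n b (gR j))"
    by (simp add: u tauR_single tauR_ncmul[OF NE_gR])
  moreover have "ncmul (Poly_Mapping.single u 1) (s_elem n b) = ncmul (Poly_Mapping.single u' 1) (ncmul (Poly_Mapping.single [j] 1) (s_elem n b))"
    by (simp only: u single_snoc[of u' j] ncmul_assoc)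
  ultimately show "eqv (tauR n b (tauR n b (Poly_Mapping.single u 1))) (ncmul (Poly_Mapping.single u 1) (s_elem n b))"
    using eqv_lmul[OF W2_single[OF u(3)] W_iiR[OF u(2)]] by simp
qed

lemma P4a: "x \<in> free_alg n 2 \<Longrightarrow> y \<in> free_alg n 2 \<Longrightarrow> eqv (ncmul (tauR n b x) y) (ncmul x (tauL n b y))"
proof -
  assume x: "x \<in> free_alg n 2" and y: "y \<in> free_alg n 2"
  show ?thesis
  proof (rule reduce[where F="\<lambda>x. ncmul (tauR n b x) y" and G="\<lambda>x. ncmul x (tauL n b y)", OF _ _ _ x])
    show "lin (\<lambda>x. ncmul (tauR n b x) y)" by (rule lin_comp[OF lin_ncmul_right lin_tauR])
    show "lin (\<lambda>x. ncmul x (tauL n b y))" by (rule lin_ncmul_right)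
  next
    fix u assume "u \<noteq> []" "set u \<subseteq> {2..n}"
    then obtain j u' where u: "u = u' @ [j]" "j \<in> {2..n}" "set u' \<subseteq> {2..n}" using word_snoc by blast
    show "eqv (ncmul (tauR n b (Poly_Mapping.single u 1)) y) (ncmul (Poly_Mapping.single u 1) (tauL n b y))"
    proof (rule reduce[where F="\<lambda>y. ncmul (tauR n b (Poly_Mapping.single u 1)) y"
          and G="\<lambda>y. ncmul (Poly_Mapping.single u 1) (tauL n b y)", OF _ _ _ y])
      show "lin (\<lambda>y. ncmul (tauR n b (Poly_Mapping.single u 1)) y)" by (rule lin_ncmul_left)
      show "lin (\<lambda>y. ncmul (Poly_Mapping.single u 1) (tauL n b y))" by (rule lin_comp[OF lin_ncmul_left lin_tauL])
    next
      fix v assume "v \<noteq> []" "set v \<subseteq> {2..n}"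
      then obtain k v' where v: "v = k # v'" "k \<in> {2..n}" "set v' \<subseteq> {2..n}" using word_cons by blast
      have "ncmul (tauR n b (Poly_Mapping.single u 1)) (Poly_Mapping.single v 1)
          = ncmul (Poly_Mapping.single u' 1) (ncmul (ncmul (gR j) (Poly_Mapping.single [k] 1)) (Poly_Mapping.single v' 1))"
        by (simp only: u v tauR_single butlast_snoc last_snoc single_cons[of k v'] ncmul_assoc)
      moreover have "ncmul (Poly_Mapping.single u 1) (tauL n b (Poly_Mapping.single v 1))
          = ncmul (Poly_Mapping.single u' 1) (ncmul (ncmul (Poly_Mapping.single [j] 1) (gL k)) (Poly_Mapping.single v' 1))"
        by (simp only: u v tauL_single list.sel single_snoc[of u' j] ncmul_assoc)
      moreover have "eqv (ncmul (Poly_Mapping.single u' 1) (ncmul (ncmul (gR j) (Poly_Mapping.single [k] 1)) (Poly_Mapping.single v' 1)))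
          (ncmul (Poly_Mapping.single u' 1) (ncmul (ncmul (Poly_Mapping.single [j] 1) (gL k)) (Poly_Mapping.single v' 1)))"
        by (intro eqv_lmul[OF W2_single[OF u(3)]] eqv_rmul[OF W2_single[OF v(3)]] W_iva u(2) v(2))
      ultimately show "eqv (ncmul (tauR n b (Poly_Mapping.single u 1)) (Poly_Mapping.single v 1))
          (ncmul (Poly_Mapping.single u 1) (tauL n b (Poly_Mapping.single v 1)))" by simp
    qed
  qed
qed

lemma P4b: "x \<in> free_alg n 2 \<Longrightarrow> eqv (tauL n b (tauR n b x)) (tauR n b (tauL n b x))"
proof (rule reduce[where F="\<lambda>x. tauL n b (tauR n b x)" and G="\<lambda>x. tauR n b (tauL n b x)"])
  show "lin (\<lambda>x. tauL n b (tauR n b x))" by (rule lin_comp[OF lin_tauL lin_tauR])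
  show "lin (\<lambda>x. tauR n b (tauL n b x))" by (rule lin_comp[OF lin_tauR lin_tauL])
next
  fix u assume "u \<noteq> []" "set u \<subseteq> {2..n}"
  then obtain j w where u: "u = j # w" "j \<in> {2..n}" "set w \<subseteq> {2..n}" using word_cons by blast
  show "eqv (tauL n b (tauR n b (Poly_Mapping.single u 1))) (tauR n b (tauL n b (Poly_Mapping.single u 1)))"
  proof (cases "w = []")
    case True
    have "tauL n b (tauR n b (Poly_Mapping.single u 1)) = tauL n b (gR j)"
      by (simp add: u True tauR_single ncmul_nil_left)
    moreover have "tauR n b (tauL n b (Poly_Mapping.single u 1)) = tauR n b (gL j)"
      by (simp add: u True tauL_single ncmul_nil_right)
    ultimately show ?thesis using W_ivb[OF u(2)] by simp
  next
    case False
    have bu: "butlast u = j # butlast w" "last u = last w" using False by (simp_all add: u)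
    have "tauL n b (tauR n b (Poly_Mapping.single u 1))
        = ncmul (ncmul (gL j) (Poly_Mapping.single (butlast w) 1)) (gR (last w))"
      by (simp add: tauR_single tauL_ncmul bu tauL_single)
    moreover have "tauR n b (tauL n b (Poly_Mapping.single u 1))
        = ncmul (gL j) (ncmul (Poly_Mapping.single (butlast w) 1) (gR (last w)))"
      by (simp add: u tauL_single tauR_ncmul False tauR_single)
    ultimately show ?thesis by (simp add: ncmul_assoc I_zero)
  qed
qed

lemma P5: "r 1 = Some m \<Longrightarrow> x \<in> free_alg n 2 \<Longrightarrow> eqv (ncmul (p_elem n e) x) (ncsc (of_nat m) (tauL n b x))"
proof (rule reduce[where F="\<lambda>x. ncmul (p_elem n e) x" and G="\<lambda>x. ncsc (of_nat m) (tauL n b x)"])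
  show "lin (\<lambda>x. ncmul (p_elem n e) x)" by (rule lin_ncmul_left)
  show "lin (\<lambda>x. ncsc (of_nat m) (tauL n b x))" by (rule lin_comp[OF lin_ncsc_map lin_tauL])
next
  assume m: "r 1 = Some m"
  fix u assume "u \<noteq> []" "set u \<subseteq> {2..n}"
  then obtain j u' where u: "u = j # u'" "j \<in> {2..n}" "set u' \<subseteq> {2..n}" using word_cons by blast
  have "ncsc (of_nat m) (tauL n b (Poly_Mapping.single u 1)) = ncmul (ncsc (of_nat m) (gL j)) (Poly_Mapping.single u' 1)"
    by (simp add: u tauL_single ncmul_ncsc_left)
  moreover have "ncmul (p_elem n e) (Poly_Mapping.single u 1) = ncmul (ncmul (p_elem n e) (Poly_Mapping.single [j] 1)) (Poly_Mapping.single u' 1)"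
    by (simp only: u single_cons[of j u'] ncmul_assoc)
  ultimately show "eqv (ncmul (p_elem n e) (Poly_Mapping.single u 1)) (ncsc (of_nat m) (tauL n b (Poly_Mapping.single u 1)))"
    using eqv_rmul[OF W2_single[OF u(3)] W_v[OF m u(2)]] by simp
qed

lemma P6: "r 1 = Some m \<Longrightarrow> x \<in> free_alg n 2 \<Longrightarrow> eqv (ncmul x (p_elem n e)) (ncsc (of_nat m) (tauR n b x))"
proof (rule reduce[where F="\<lambda>x. ncmul x (p_elem n e)" and G="\<lambda>x. ncsc (of_nat m) (tauR n b x)"])
  show "lin (\<lambda>x. ncmul x (p_elem n e))" by (rule lin_ncmul_right)
  show "lin (\<lambda>x. ncsc (of_nat m) (tauR n b x))" by (rule lin_comp[OF lin_ncsc_map lin_tauR])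
next
  assume m: "r 1 = Some m"
  fix u assume "u \<noteq> []" "set u \<subseteq> {2..n}"
  then obtain j u' where u: "u = u' @ [j]" "j \<in> {2..n}" "set u' \<subseteq> {2..n}" using word_snoc by blast
  have "ncsc (of_nat m) (tauR n b (Poly_Mapping.single u 1)) = ncmul (Poly_Mapping.single u' 1) (ncsc (of_nat m) (gR j))"
    by (simp add: u tauR_single ncmul_ncsc_right)
  moreover have "ncmul (Poly_Mapping.single u 1) (p_elem n e) = ncmul (Poly_Mapping.single u' 1) (ncmul (Poly_Mapping.single [j] 1) (p_elem n e))"
    by (simp only: u single_snoc[of u' j] ncmul_assoc)
  ultimately show "eqv (ncmul (Poly_Mapping.single u 1) (p_elem n e)) (ncsc (of_nat m) (tauR n b (Poly_Mapping.single u 1)))"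
    using eqv_lmul[OF W2_single[OF u(3)] W_vi[OF m u(2)]] by simp
qed

lemma main:
  shows "alg_eq n r e b 2 (tauL n b (s_elem n b)) (tauR n b (s_elem n b))
    \<and> (\<forall>x\<in>free_alg n 2. \<forall>y\<in>free_alg n 2.
         alg_eq n r e b 2 (tauL n b (tauL n b x)) (ncmul (s_elem n b) x)
       \<and> alg_eq n r e b 2 (tauR n b (tauR n b x)) (ncmul x (s_elem n b))
       \<and> alg_eq n r e b 2 (tauL n b (ncmul x y)) (ncmul (tauL n b x) y)
       \<and> alg_eq n r e b 2 (tauR n b (ncmul x y)) (ncmul x (tauR n b y))
       \<and> alg_eq n r e b 2 (ncmul (tauR n b x) y) (ncmul x (tauL n b y))
       \<and> alg_eq n r e b 2 (tauL n b (tauR n b x)) (tauR n b (tauL n b x))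
       \<and> (\<forall>m. r 1 = Some m \<longrightarrow>
            alg_eq n r e b 2 (ncmul (p_elem n e) x) (ncsc (of_nat m) (tauL n b x))
          \<and> alg_eq n r e b 2 (ncmul x (p_elem n e)) (ncsc (of_nat m) (tauR n b x))))"
  unfolding alg_eq_def
proof (intro conjI ballI allI impI)
  show "eqv (tauL n b (s_elem n b)) (tauR n b (s_elem n b))" by (rule W_i)
  fix x y :: "'r ncpoly" assume x: "x \<in> free_alg n 2" and y: "y \<in> free_alg n 2"
  show "eqv (tauL n b (tauL n b x)) (ncmul (s_elem n b) x)" by (rule P2L[OF x])
  show "eqv (tauR n b (tauR n b x)) (ncmul x (s_elem n b))" by (rule P2R[OF x])
  show "eqv (tauL n b (ncmul x y)) (ncmul (tauL n b x) y)"
    by (rule eqv_eq, rule tauL_ncmul[OF free_NE[OF x]])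
  show "eqv (tauR n b (ncmul x y)) (ncmul x (tauR n b y))"
    by (rule eqv_eq, rule tauR_ncmul[OF free_NE[OF y]])
  show "eqv (ncmul (tauR n b x) y) (ncmul x (tauL n b y))" by (rule P4a[OF x y])
  show "eqv (tauL n b (tauR n b x)) (tauR n b (tauL n b x))" by (rule P4b[OF x])
  fix m assume m: "r 1 = Some m"
  show "eqv (ncmul (p_elem n e) x) (ncsc (of_nat m) (tauL n b x))" by (rule P5[OF m x])
  show "eqv (ncmul x (p_elem n e)) (ncsc (of_nat m) (tauR n b x))" by (rule P6[OF m x])
qed

end

theorem lemma23:
  fixes n :: nat and r :: "nat \<Rightarrow> nat option"
    and e :: "nat \<Rightarrow> nat \<Rightarrow> 'r::comm_ring_1" and b :: "nat \<Rightarrow> nat \<Rightarrow> nat \<Rightarrow> 'r"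
  assumes ring: "((\<forall>x::'r. x \<noteq> 0 \<longrightarrow> (\<exists>y. x * y = 1)) \<and> (\<forall>i. r i = None))
                 \<or> bij (of_int :: int \<Rightarrow> 'r)"
    and n1: "1 \<le> n"
    and pres: "nil_presentation n r e b"
    and cons: "consistent n r e b 2"
    and test1: "\<And>i j k. i \<in> {1..n} \<Longrightarrow> j \<in> {1..n} \<Longrightarrow> k \<in> {1..n} \<Longrightarrow>
        weight n r e b k + weight n r e b j + weight n r e b i \<le> max_weight n r e b \<Longrightarrow>
        c_mul n r e b (gen_lin k) (c_mul n r e b (gen_lin j) (gen_lin i))
        = c_mul n r e b (c_mul n r e b (gen_lin k) (gen_lin j)) (gen_lin i)"
    and test2: "\<And>i j m. i \<in> {1..n} \<Longrightarrow> j \<in> {1..n} \<Longrightarrow> r j = Some m \<Longrightarrow>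
        weight n r e b j + weight n r e b i \<le> max_weight n r e b \<Longrightarrow>
        c_scale n r e m (c_mul n r e b (gen_lin j) (gen_lin i))
        = c_mul n r e b (c_scale n r e m (gen_lin j)) (gen_lin i)"
    and test3: "\<And>i j m. i \<in> {1..n} \<Longrightarrow> j \<in> {1..n} \<Longrightarrow> r i = Some m \<Longrightarrow>
        weight n r e b j + weight n r e b i \<le> max_weight n r e b \<Longrightarrow>
        c_scale n r e m (c_mul n r e b (gen_lin j) (gen_lin i))
        = c_mul n r e b (gen_lin j) (c_scale n r e m (gen_lin i))"
  shows "alg_eq n r e b 2 (tauL n b (s_elem n b)) (tauR n b (s_elem n b))
    \<and> (\<forall>x\<in>free_alg n 2. \<forall>y\<in>free_alg n 2.
         alg_eq n r e b 2 (tauL n b (tauL n b x)) (ncmul (s_elem n b) x)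
       \<and> alg_eq n r e b 2 (tauR n b (tauR n b x)) (ncmul x (s_elem n b))
       \<and> alg_eq n r e b 2 (tauL n b (ncmul x y)) (ncmul (tauL n b x) y)
       \<and> alg_eq n r e b 2 (tauR n b (ncmul x y)) (ncmul x (tauR n b y))
       \<and> alg_eq n r e b 2 (ncmul (tauR n b x) y) (ncmul x (tauL n b y))
       \<and> alg_eq n r e b 2 (tauL n b (tauR n b x)) (tauR n b (tauL n b x))
       \<and> (\<forall>m. r 1 = Some m \<longrightarrow>
            alg_eq n r e b 2 (ncmul (p_elem n e) x) (ncsc (of_nat m) (tauL n b x))
          \<and> alg_eq n r e b 2 (ncmul x (p_elem n e)) (ncsc (of_nat m) (tauR n b x))))"
proof -
  interpret L23 n r e b
    by (rule L23.intro[OF ring n1 pres test1 test2 test3])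
  show ?thesis by (rule main)
qed


end
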